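(* Let $f=(f_1,f_2):\mathbb{R}^2\to\mathbb{R}^2$ be a polynomial mapping, with $J$, $F_1$, $F_2$ as in the context, and let $I'$ be the ideal of $\mathbb{R}[x,y]$ generated by $J,F_1,F_2,\frac{\partial(J,F_1)}{\partial(x,y)},\frac{\partial(J,F_2)}{\partial(x,y)}$. If $I'=\mathbb{R}[x,y]$, then $f$ is one-generic and every critical point of $f$ is either a fold point or a cusp point. Moreover the set $\Sigma$ of cusp points equals $\{p: J(p)=0,F_1(p)=0,F_2(p)=0\}$ and is finite.
   Context: $J=\det Df$, and $F_i=\frac{\partial J}{\partial x}\frac{\partial f_i}{\partial y}-\frac{\partial J}{\partial y}\frac{\partial f_i}{\partial x}$ for $i=1,2$; $\frac{\partial(g,h)}{\partial(x,y)}=\frac{\partial g}{\partial x}\frac{\partial h}{\partial y}-\frac{\partial g}{\partial y}\frac{\partial h}{\partial x}$. For a smooth $f:\mathbb{R}^2\to\mathbb{R}^2$, let $S_r(f)=\{p:\operatorname{corank}Df(p)=r\}$ with $\operatorname{corank}=2-\operatorname{rank}$, and $S_r\subset J^1(\mathbb{R}^2,\mathbb{R}^2)$ the set of 1-jets of corank $r$; $f$ is one-generic if $j^1f$ is transverse to $S_r$ for all $r$. For one-generic $f$, a point $p\in S_1(f)$ is a fold point if $T_pS_1(f)+\ker Df(p)=\mathbb{R}^2$; if instead $T_pS_1(f)=\ker Df(p)$, take a smooth $k$ near $p$ vanishing on $S_1(f)$ with $dk(p)\ne0$ and a nonvanishing vector field $\xi$ along $S_1(f)$ with $\xi\in\ker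 Df$; $p$ is a (simple) cusp point if $p$ is a simple zero of the function $dk(\xi)$ on $S_1(f)$ (this is independent of choices). *)

theory Defs
  imports "HOL-Analysis.Analysis"
begin

type_synonym pt = "real \<times> real"
type_synonym jet1 = "pt \<times> pt \<times> (pt \<Rightarrow>\<^sub>L pt)"

definition poly2 :: "(pt \<Rightarrow> real) \<Rightarrow> bool" where
  "poly2 g \<longleftrightarrow> (\<exists>n c. \<forall>x y. g (x, y) = (\<Sum>i\<le>n. \<Sum>j\<le>n. c i j * x ^ i * y ^ j))"

definition px :: "(pt \<Rightarrow> real) \<Rightarrow> pt \<Rightarrow> real" where
  "px g p = deriv (\<lambda>t. g (t, snd p)) (fst p)"

definition py :: "(pt \<Rightarrow> real) \<Rightarrow> pt \<Rightarrow> real" where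
  "py g p = deriv (\<lambda>t. g (fst p, t)) (snd p)"

definition jac :: "(pt \<Rightarrow> real) \<Rightarrow> (pt \<Rightarrow> real) \<Rightarrow> pt \<Rightarrow> real" where
  "jac g h p = px g p * py h p - py g p * px h p"

definition comp1 :: "(pt \<Rightarrow> pt) \<Rightarrow> pt \<Rightarrow> real" where
  "comp1 f p = fst (f p)"
definition comp2 :: "(pt \<Rightarrow> pt) \<Rightarrow> pt \<Rightarrow> real" where
  "comp2 f p = snd (f p)"

definition Jdet :: "(pt \<Rightarrow> pt) \<Rightarrow> pt \<Rightarrow> real" where
  "Jdet f = jac (comp1 f) (comp2 f)"

definition Fi :: "(pt \<Rightarrow> pt) \<Rightarrow> (pt \<Rightarrow> real) \<Rightarrow> pt \<Rightarrow> real" where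
  "Fi f fi = jac (Jdet f) fi"

definition F1 :: "(pt \<Rightarrow> pt) \<Rightarrow> pt \<Rightarrow> real" where
  "F1 f = Fi f (comp1 f)"
definition F2 :: "(pt \<Rightarrow> pt) \<Rightarrow> pt \<Rightarrow> real" where
  "F2 f = Fi f (comp2 f)"

definition Df :: "(pt \<Rightarrow> pt) \<Rightarrow> pt \<Rightarrow> pt \<Rightarrow> pt" where
  "Df f p = frechet_derivative f (at p)"

definition corank :: "(pt \<Rightarrow> pt) \<Rightarrow> pt \<Rightarrow> nat" where
  "corank f p = 2 - dim (range (Df f p))"

definition kerDf :: "(pt \<Rightarrow> pt) \<Rightarrow> pt \<Rightarrow> pt set" where
  "kerDf f p = {v. Df f p v = 0}"

definition Sr :: "(pt \<Rightarrow> pt) \<Rightarrow> nat \<Rightarrow> pt set" where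
  "Sr f r = {p. corank f p = r}"

definition tangent_set :: "'a::real_normed_vector set \<Rightarrow> 'a \<Rightarrow> 'a set" where
  "tangent_set S q = {v. \<exists>\<gamma> e. e > 0 \<and> \<gamma> 0 = q \<and> (\<forall>t\<in>ball 0 e. \<gamma> t \<in> S)
                        \<and> (\<gamma> has_vector_derivative v) (at 0)}"

definition setsum :: "'a::real_normed_vector set \<Rightarrow> 'a set \<Rightarrow> 'a set" where
  "setsum A B = {a + b | a b. a \<in> A \<and> b \<in> B}"

definition transversal :: "('a::real_normed_vector \<Rightarrow> 'b::real_normed_vector) \<Rightarrow> 'b set \<Rightarrow> bool" where
  "transversal g S \<longleftrightarrow> (\<forall>p. g p \<in> S \<longrightarrow>
      (\<exists>D. (g has_derivative D) (at p) \<and> setsum (range D) (tangent_set S (g p)) = UNIV))"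

definition jet1 :: "(pt \<Rightarrow> pt) \<Rightarrow> pt \<Rightarrow> jet1" where
  "jet1 f p = (p, f p, Blinfun (Df f p))"

definition Sjet :: "nat \<Rightarrow> jet1 set" where
  "Sjet r = {(p, q, L). 2 - dim (range (blinfun_apply L)) = r}"

definition one_generic :: "(pt \<Rightarrow> pt) \<Rightarrow> bool" where
  "one_generic f \<longleftrightarrow> (\<forall>r. transversal (jet1 f) (Sjet r))"

definition fold_point :: "(pt \<Rightarrow> pt) \<Rightarrow> pt \<Rightarrow> bool" where
  "fold_point f p \<longleftrightarrow> p \<in> Sr f 1 \<and> setsum (tangent_set (Sr f 1) p) (kerDf f p) = UNIV"

definition cusp_point :: "(pt \<Rightarrow> pt) \<Rightarrow> pt \<Rightarrow> bool" where
  "cusp_point f p \<longleftrightarrow> p \<in> Sr f 1 \<and> tangent_set (Sr f 1) p = kerDf f p \<and>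
     (\<exists>U k dk \<xi> \<gamma> \<gamma>' e. open U \<and> p \<in> U \<and> e > 0 \<and>
        (\<forall>q\<in>U. (k has_derivative blinfun_apply (dk q)) (at q)) \<and> continuous_on U dk \<and>
        (\<forall>q\<in>U \<inter> Sr f 1. k q = 0) \<and> dk p \<noteq> 0 \<and>
        continuous_on (U \<inter> Sr f 1) \<xi> \<and>
        (\<forall>q\<in>U \<inter> Sr f 1. \<xi> q \<noteq> 0 \<and> Df f q (\<xi> q) = 0) \<and>
        \<gamma> 0 = p \<and> inj_on \<gamma> (ball 0 e) \<and> \<gamma> ` ball 0 e = U \<inter> Sr f 1 \<and>
        (\<forall>t\<in>ball 0 e. (\<gamma> has_vector_derivative \<gamma>' t) (at t) \<and> \<gamma>' t \<noteq> 0) \<and>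
        continuous_on (ball 0 e) \<gamma>' \<and>
        (let h = (\<lambda>t. blinfun_apply (dk (\<gamma> t)) (\<xi> (\<gamma> t))) in
           h 0 = 0 \<and> (\<exists>c. c \<noteq> 0 \<and> (h has_real_derivative c) (at 0))))"

end

theory Submission
  imports Defs "HOL-Computational_Algebra.Polynomial_Factorial"
begin


definition ev :: "real poly poly \<Rightarrow> pt \<Rightarrow> real" where
  "ev P p = poly (poly P [:snd p:]) (fst p)"

lemma ev_add[simp]: "ev (P + Q) p = ev P p + ev Q p" by (simp add: ev_def)
lemma ev_diff[simp]: "ev (P - Q) p = ev P p - ev Q p" by (simp add: ev_def)
lemma ev_minus[simp]: "ev (- P) p = - ev P p" by (simp add: ev_def)
lemma ev_mult[simp]: "ev (P * Q) p = ev P p * ev Q p" by (simp add: ev_def)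
lemma ev_power[simp]: "ev (P ^ n) p = ev P p ^ n" by (simp add: ev_def)
lemma ev_0[simp]: "ev 0 p = 0" by (simp add: ev_def)
lemma ev_1[simp]: "ev 1 p = 1" by (simp add: ev_def)
lemma ev_const[simp]: "ev [:[:c:]:] p = c" by (simp add: ev_def)
lemma ev_X[simp]: "ev [:[:0,1:]:] p = fst p" by (simp add: ev_def)
lemma ev_Y[simp]: "ev [:0,1:] p = snd p" by (simp add: ev_def)
lemma ev_pCons: "ev (pCons c Q) p = poly c (fst p) + snd p * ev Q p"
  by (simp add: ev_def)
lemma ev_smult[simp]: "ev (smult u P) p = poly u (fst p) * ev P p" by (simp add: ev_def)
lemma ev_sum: "ev (sum F A) p = (\<Sum>a\<in>A. ev (F a) p)"
  by (induction A rule: infinite_finite_induct) simp_all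

definition dxP :: "real poly poly \<Rightarrow> real poly poly" where "dxP P = map_poly pderiv P"
definition dyP :: "real poly poly \<Rightarrow> real poly poly" where "dyP P = pderiv P"

lemma dxP_pCons: "dxP (pCons c Q) = pCons (pderiv c) (dxP Q)"
  by (simp add: dxP_def map_poly_pCons)
lemma dyP_pCons: "dyP (pCons c Q) = Q + pCons 0 (dyP Q)"
  by (simp add: dyP_def pderiv_pCons)

lemma poly_fst_deriv:
  "((\<lambda>q::pt. poly c (fst q)) has_derivative (\<lambda>v. fst v * poly (pderiv c) (fst p))) (at p)"
  by (rule DERIV_compose_FDERIV[OF poly_DERIV has_derivative_fst[OF has_derivative_ident]])

lemma ev_has_derivative:
  "(ev P has_derivative (\<lambda>v. ev (dxP P) p * fst v + ev (dyP P) p * snd v)) (at p)"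
proof (induction P)
  case 0
  then show ?case by (simp add: dxP_def dyP_def)
next
  case (pCons c Q)
  have e: "ev (pCons c Q) = (\<lambda>q. poly c (fst q) + snd q * ev Q q)"
    by (rule ext) (simp add: ev_pCons)
  have "((\<lambda>q. poly c (fst q) + snd q * ev Q q) has_derivative
     (\<lambda>v. fst v * poly (pderiv c) (fst p) + (snd p * (ev (dxP Q) p * fst v + ev (dyP Q) p * snd v) + snd v * ev Q p))) (at p)"
    by (intro has_derivative_add poly_fst_deriv has_derivative_mult pCons.IH has_derivative_snd has_derivative_ident)
  then show ?case unfolding e
    by (rule has_derivative_eq_rhs) (auto simp: dxP_pCons dyP_pCons ev_pCons algebra_simps)
qed

lemma ev_cont[continuous_intros]: "continuous_on S (ev P)"
  using ev_has_derivative has_derivative_continuous continuous_at_imp_continuous_on by blast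

lemma ev_cont_at: "isCont (ev P) p"
  using ev_has_derivative has_derivative_continuous by blast

lemma px_ev: "px (ev P) = ev (dxP P)"
proof (rule ext)
  fix p :: pt
  have "((\<lambda>t. ev P (t, snd p)) has_derivative (\<lambda>h. ev (dxP P) (fst p, snd p) * h)) (at (fst p))"
    using has_derivative_compose[OF has_derivative_Pair[OF has_derivative_ident has_derivative_const] ev_has_derivative[of P "(fst p, snd p)"]]
    by (simp add: o_def)
  then have "((\<lambda>t. ev P (t, snd p)) has_real_derivative ev (dxP P) p) (at (fst p))"
    by (simp add: has_field_derivative_def mult_commute_abs)
  then show "px (ev P) p = ev (dxP P) p" unfolding px_def by (rule DERIV_imp_deriv)
qed

lemma py_ev: "py (ev P) = ev (dyP P)"
proof (rule ext)
  fix p :: pt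
  have "((\<lambda>t. ev P (fst p, t)) has_derivative (\<lambda>h. ev (dyP P) (fst p, snd p) * h)) (at (snd p))"
    using has_derivative_compose[OF has_derivative_Pair[OF has_derivative_const has_derivative_ident] ev_has_derivative[of P "(fst p, snd p)"]]
    by (simp add: o_def)
  then have "((\<lambda>t. ev P (fst p, t)) has_real_derivative ev (dyP P) p) (at (snd p))"
    by (simp add: has_field_derivative_def mult_commute_abs)
  then show "py (ev P) p = ev (dyP P) p" unfolding py_def by (rule DERIV_imp_deriv)
qed

definition jacP :: "real poly poly \<Rightarrow> real poly poly \<Rightarrow> real poly poly" where
  "jacP A B = dxP A * dyP B - dyP A * dxP B"

lemma jac_ev: "jac (ev A) (ev B) = ev (jacP A B)"
  by (rule ext) (simp add: jac_def jacP_def px_ev py_ev)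

lemma ev_has_derivative':
  "(ev P has_derivative (\<lambda>v. px (ev P) p * fst v + py (ev P) p * snd v)) (at p)"
  using ev_has_derivative by (simp add: px_ev py_ev)

lemma poly2_ev: assumes "poly2 g" shows "\<exists>P. g = ev P"
proof -
  from assms obtain n c where g: "\<And>x y. g (x, y) = (\<Sum>i\<le>n. \<Sum>j\<le>n. c i j * x ^ i * y ^ j)"
    unfolding poly2_def by blast
  define P where "P = (\<Sum>i\<le>n. \<Sum>j\<le>n. [:[:c i j:]:] * [:[:0,1:]:] ^ i * [:0,1:] ^ j)"
  have "g = ev P"
  proof (rule ext)
    fix p :: pt
    obtain x y where p: "p = (x, y)" by (cases p)
    show "g p = ev P p" unfolding p g P_def by (simp add: ev_sum mult.assoc)
  qed
  then show ?thesis by blast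
qed

lemma poly_map_const: "poly (map_poly (\<lambda>a. [:a:]) c) [:y:] = [:poly c y:]"
  by (induction c) (simp_all add: map_poly_pCons mult.commute)

lemma ev_swap: "\<exists>Q. \<forall>x y. ev Q (x, y) = ev P (y, x)"
proof (induction P)
  case 0
  then show ?case by (intro exI[of _ 0]) simp
next
  case (pCons c P)
  then obtain Q where Q: "\<forall>x y. ev Q (x, y) = ev P (y, x)" by blast
  show ?case
    by (intro exI[of _ "map_poly (\<lambda>a. [:a:]) c + [:[:0,1:]:] * Q"])
      (simp add: ev_pCons Q, simp add: ev_def poly_map_const)
qed


lemma ev_DERIV_x: "((\<lambda>t. ev P (t, y)) has_real_derivative ev (dxP P) (x, y)) (at x)"
proof -
  have "((\<lambda>t. ev P (t, y)) has_derivative (\<lambda>h. ev (dxP P) (x, y) * h)) (at x)"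
    using has_derivative_compose[OF has_derivative_Pair[OF has_derivative_ident has_derivative_const] ev_has_derivative[of P "(x, y)"]]
    by (simp add: o_def)
  then show ?thesis by (simp add: has_field_derivative_def mult_commute_abs)
qed

lemma ev_DERIV_y: "((\<lambda>t. ev P (x, t)) has_real_derivative ev (dyP P) (x, y)) (at y)"
proof -
  have "((\<lambda>t. ev P (x, t)) has_derivative (\<lambda>h. ev (dyP P) (x, y) * h)) (at y)"
    using has_derivative_compose[OF has_derivative_Pair[OF has_derivative_const has_derivative_ident] ev_has_derivative[of P "(x, y)"]]
    by (simp add: o_def)
  then show ?thesis by (simp add: has_field_derivative_def mult_commute_abs)
qed

lemma px_mult_ev: "px (\<lambda>q. ev A q * ev B q) p = ev (dxP A) p * ev B p + ev A p * ev (dxP B) p"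
proof -
  have "((\<lambda>t. ev A (t, snd p) * ev B (t, snd p)) has_real_derivative
     ev A (fst p, snd p) * ev (dxP B) (fst p, snd p) + ev (dxP A) (fst p, snd p) * ev B (fst p, snd p)) (at (fst p))"
    using DERIV_mult[OF ev_DERIV_x[of A "snd p" "fst p"] ev_DERIV_x[of B "snd p" "fst p"]] by (simp add: algebra_simps)
  then show ?thesis unfolding px_def by (auto dest!: DERIV_imp_deriv simp: algebra_simps)
qed

lemma py_mult_ev: "py (\<lambda>q. ev A q * ev B q) p = ev (dyP A) p * ev B p + ev A p * ev (dyP B) p"
proof -
  have "((\<lambda>t. ev A (fst p, t) * ev B (fst p, t)) has_real_derivative
     ev A (fst p, snd p) * ev (dyP B) (fst p, snd p) + ev (dyP A) (fst p, snd p) * ev B (fst p, snd p)) (at (snd p))"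
    using DERIV_mult[OF ev_DERIV_y[of A "fst p" "snd p"] ev_DERIV_y[of B "fst p" "snd p"]] by (simp add: algebra_simps)
  then show ?thesis unfolding py_def by (auto dest!: DERIV_imp_deriv simp: algebra_simps)
qed

lemma jac_mult0:
  assumes "ev H1 p = 0" "ev H2 p = 0"
  shows "jac (\<lambda>q. ev G1 q * ev H1 q) (\<lambda>q. ev G2 q * ev H2 q) p = ev G1 p * ev G2 p * jac (ev H1) (ev H2) p"
  unfolding jac_def px_mult_ev py_mult_ev using assms by (simp add: px_ev py_ev algebra_simps)

lemma fract_poly_pCons': "fract_poly (pCons x R) = pCons (to_fract x) (fract_poly R)"
  by (simp add: map_poly_pCons)

lemma clear_denoms: "\<exists>c P. c \<noteq> 0 \<and> fract_poly P = smult (to_fract c) (q :: real poly fract poly)"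
proof (induction q)
  case 0
  then show ?case by (intro exI[of _ 1] exI[of _ 0]) simp
next
  case (pCons a q)
  then obtain c P where cP: "c \<noteq> 0" "fract_poly P = smult (to_fract c) q" by blast
  obtain n d where a: "a = Fract n d" "d \<noteq> 0" by (cases a) auto
  show ?case
  proof (intro exI conjI)
    show "d * c \<noteq> 0" using a cP by simp
    have "to_fract (d * c) * a = to_fract (c * n)" using a by (simp add: to_fract_def eq_fract)
    then show "fract_poly (pCons (c * n) (smult d P)) = smult (to_fract (d * c)) (pCons a q)"
      using a cP by (simp add: fract_poly_pCons')
  qed
qed

lemma bezout_field:
  fixes a b :: "'a::field poly"
  assumes "a \<noteq> 0 \<or> b \<noteq> 0"
  shows "\<exists>g s t a1 b1. g \<noteq> 0 \<and> a = g * a1 \<and> b = g * b1 \<and> s * a1 + t * b1 = 1"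
proof -
  define I where "I = {s * a + t * b | s t. True}"
  have I_lin: "u * x + v * y \<in> I" if "x \<in> I" "y \<in> I" for u v x y
  proof -
    from that obtain s1 t1 s2 t2 where "x = s1 * a + t1 * b" "y = s2 * a + t2 * b" unfolding I_def by blast
    then have "u * x + v * y = (u * s1 + v * s2) * a + (u * t1 + v * t2) * b" by (simp add: algebra_simps)
    then show ?thesis unfolding I_def by blast
  qed
  have aI: "a \<in> I" and bI: "b \<in> I" unfolding I_def by (auto intro: exI[of _ 1] exI[of _ 0])
  have "\<exists>x. x \<in> I \<and> x \<noteq> 0" using assms aI bI by blast
  then have "\<exists>n. \<exists>x. x \<in> I \<and> x \<noteq> 0 \<and> degree x = n" by blast
  from exists_least_iff[THEN iffD1, OF this] obtain n where
    n: "\<exists>x. x \<in> I \<and> x \<noteq> 0 \<and> degree x = n" and least: "\<And>m. m < n \<Longrightarrow> \<not> (\<exists>x. x \<in> I \<and> x \<noteq> 0 \<and> degree x = m)"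
    by blast
  then obtain g where g: "g \<in> I" "g \<noteq> 0" "degree g = n" by blast
  have dv: "g dvd x" if "x \<in> I" for x
  proof -
    have "1 * x + (- (x div g)) * g = x mod g"
      by (simp add: minus_div_mult_eq_mod[symmetric])
    then have "x mod g \<in> I" using I_lin[OF that g(1), of 1 "- (x div g)"] by simp
    then have "x mod g = 0" using least[of "degree (x mod g)"] g degree_mod_less[of g x] by auto
    then show ?thesis by (simp add: mod_eq_0_iff_dvd)
  qed
  obtain a1 where a1: "a = g * a1" using dv[OF aI] by (auto elim: dvdE)
  obtain b1 where b1: "b = g * b1" using dv[OF bI] by (auto elim: dvdE)
  obtain s t where st: "g = s * a + t * b" using g(1) unfolding I_def by blast
  have "g * (s * a1 + t * b1) = g * 1" using st a1 b1 by (simp add: algebra_simps)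
  then have "s * a1 + t * b1 = 1" using g(2) by simp
  then show ?thesis using g(2) a1 b1 by blast
qed

lemma ev_pconst[simp]: "ev [:u:] q = poly u (fst q)" by (simp add: ev_def)

lemma fin_fst:
  "finite (fst ` {p. ev A p = 0 \<and> ev B p = 0 \<and> jac (ev A) (ev B) p \<noteq> 0})"
proof (cases "A = 0 \<and> B = 0")
  case True
  then have A0: "A = 0" and B0: "B = 0" by auto
  then have eq: "{p. ev A p = 0 \<and> ev B p = 0 \<and> jac (ev A) (ev B) p \<noteq> 0} = {}"
    by (simp add: jac_ev jacP_def dxP_def dyP_def)
  show ?thesis unfolding eq by simp
next
  case False
  define a where "a = fract_poly A"
  define b where "b = fract_poly B"
  have "a \<noteq> 0 \<or> b \<noteq> 0" using False by (auto simp: a_def b_def)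
  from bezout_field[OF this] obtain g s t a1 b1 where
    gab: "g \<noteq> 0" "a = g * a1" "b = g * b1" "s * a1 + t * b1 = 1" by blast
  obtain cg G0 where cg: "cg \<noteq> 0" "fract_poly G0 = smult (to_fract cg) g" using clear_denoms by blast
  obtain ca A0 where ca: "ca \<noteq> 0" "fract_poly A0 = smult (to_fract ca) a1" using clear_denoms by blast
  obtain cb B0 where cb: "cb \<noteq> 0" "fract_poly B0 = smult (to_fract cb) b1" using clear_denoms by blast
  obtain cs S0 where cs: "cs \<noteq> 0" "fract_poly S0 = smult (to_fract cs) s" using clear_denoms by blast
  obtain ct T0 where ct: "ct \<noteq> 0" "fract_poly T0 = smult (to_fract ct) t" using clear_denoms by blast
  have eA: "smult (cg * ca) A = G0 * A0"
  proof -
    have "fract_poly (smult (cg * ca) A) = fract_poly (G0 * A0)"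
      using cg ca gab by (simp add: a_def[symmetric] mult_ac)
    then show ?thesis by (simp only: fract_poly_eq_iff)
  qed
  have eB: "smult (cg * cb) B = G0 * B0"
  proof -
    have "fract_poly (smult (cg * cb) B) = fract_poly (G0 * B0)"
      using cg cb gab by (simp add: b_def[symmetric] mult_ac)
    then show ?thesis by (simp only: fract_poly_eq_iff)
  qed
  define K where "K = cs * ca * ct * cb"
  have eK: "smult (ct * cb) (S0 * A0) + smult (cs * ca) (T0 * B0) = [:K:]"
  proof -
    have "fract_poly (smult (ct * cb) (S0 * A0) + smult (cs * ca) (T0 * B0)) =
        smult (to_fract K) (s * a1 + t * b1)"
      using cs ca ct cb by (simp add: K_def algebra_simps smult_add_right)
    also have "\<dots> = fract_poly [:K:]" using gab(4) by (simp add: fract_poly_pCons')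
    finally show ?thesis by (simp only: fract_poly_eq_iff)
  qed
  define Q where "Q = cg * ca * cb * K"
  have Q0: "Q \<noteq> 0" using cg ca cb cs ct by (simp add: Q_def K_def)
  have sub: "fst ` {p. ev A p = 0 \<and> ev B p = 0 \<and> jac (ev A) (ev B) p \<noteq> 0} \<subseteq> {x. poly Q x = 0}"
  proof (rule image_subsetI, rule CollectI, rule ccontr)
    fix p assume p: "p \<in> {p. ev A p = 0 \<and> ev B p = 0 \<and> jac (ev A) (ev B) p \<noteq> 0}"
      and nz: "poly Q (fst p) \<noteq> 0"
    have k: "poly (ct * cb) (fst p) * (ev S0 p * ev A0 p) + poly (cs * ca) (fst p) * (ev T0 p * ev B0 p) = poly K (fst p)"
      using arg_cong[OF eK, of "\<lambda>P. ev P p"] by simp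
    have "poly K (fst p) \<noteq> 0" using nz by (simp add: Q_def)
    then have AB: "ev A0 p \<noteq> 0 \<or> ev B0 p \<noteq> 0" using k by auto
    have "ev G0 p * ev A0 p = 0" using arg_cong[OF eA, of "\<lambda>P. ev P p"] p by simp
    moreover have "ev G0 p * ev B0 p = 0" using arg_cong[OF eB, of "\<lambda>P. ev P p"] p by simp
    ultimately have G0: "ev G0 p = 0" using AB by auto
    have f1: "(\<lambda>q. ev [:cg * ca:] q * ev A q) = (\<lambda>q. ev A0 q * ev G0 q)"
      using eA by (intro ext) (metis ev_mult ev_pconst ev_smult mult.commute)
    have f2: "(\<lambda>q. ev [:cg * cb:] q * ev B q) = (\<lambda>q. ev B0 q * ev G0 q)"
      using eB by (intro ext) (metis ev_mult ev_pconst ev_smult mult.commute)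
    have "jac (\<lambda>q. ev [:cg * ca:] q * ev A q) (\<lambda>q. ev [:cg * cb:] q * ev B q) p
        = poly (cg * ca) (fst p) * poly (cg * cb) (fst p) * jac (ev A) (ev B) p"
      using p by (subst jac_mult0) auto
    moreover have "jac (\<lambda>q. ev A0 q * ev G0 q) (\<lambda>q. ev B0 q * ev G0 q) p = 0"
      using G0 by (subst jac_mult0) (auto simp: jac_def)
    ultimately have "poly (cg * ca) (fst p) * poly (cg * cb) (fst p) * jac (ev A) (ev B) p = 0"
      using f1 f2 by simp
    moreover have "poly (cg * ca) (fst p) \<noteq> 0" "poly (cg * cb) (fst p) \<noteq> 0"
      using nz by (auto simp: Q_def)
    ultimately show False using p by simp
  qed
  show ?thesis by (rule finite_subset[OF sub poly_roots_finite[OF Q0]])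
qed

lemma fin_Z: "finite {p. ev A p = 0 \<and> ev B p = 0 \<and> jac (ev A) (ev B) p \<noteq> 0}"
proof -
  obtain A' where A': "\<And>x y. ev A' (x, y) = ev A (y, x)" using ev_swap by blast
  obtain B' where B': "\<And>x y. ev B' (x, y) = ev B (y, x)" using ev_swap by blast
  have sx: "px (ev A') (x, y) = py (ev A) (y, x)"
    if "\<And>x y. ev A' (x, y) = ev A (y, x)" for A A' :: "real poly poly" and x y unfolding px_def py_def using that by simp
  have sy: "py (ev A') (x, y) = px (ev A) (y, x)"
    if "\<And>x y. ev A' (x, y) = ev A (y, x)" for A A' :: "real poly poly" and x y unfolding px_def py_def using that by simp
  have jsw: "jac (ev A') (ev B') (x, y) = - jac (ev A) (ev B) (y, x)" for x y
    unfolding jac_def using sx[OF A'] sy[OF A'] sx[OF B'] sy[OF B'] by simp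
  let ?Z = "{p. ev A p = 0 \<and> ev B p = 0 \<and> jac (ev A) (ev B) p \<noteq> 0}"
  have "snd ` ?Z \<subseteq> fst ` {p. ev A' p = 0 \<and> ev B' p = 0 \<and> jac (ev A') (ev B') p \<noteq> 0}"
  proof
    fix y assume "y \<in> snd ` ?Z"
    then obtain x where "(x, y) \<in> ?Z" by auto
    then have "(y, x) \<in> {p. ev A' p = 0 \<and> ev B' p = 0 \<and> jac (ev A') (ev B') p \<noteq> 0}"
      using A' B' jsw by simp
    then show "y \<in> fst ` {p. ev A' p = 0 \<and> ev B' p = 0 \<and> jac (ev A') (ev B') p \<noteq> 0}"
      by force
  qed
  then have "finite (snd ` ?Z)" using fin_fst finite_subset by blast
  moreover have "finite (fst ` ?Z)" by (rule fin_fst)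
  ultimately have "finite (fst ` ?Z \<times> snd ` ?Z)" by simp
  moreover have "?Z \<subseteq> fst ` ?Z \<times> snd ` ?Z" by force
  ultimately show ?thesis using finite_subset by blast
qed


definition lin22 :: "real \<Rightarrow> real \<Rightarrow> real \<Rightarrow> real \<Rightarrow> pt \<Rightarrow> pt" where
  "lin22 a b c d v = (a * fst v + b * snd v, c * fst v + d * snd v)"

lemma linear_lin22: "linear (lin22 a b c d)"
  by (rule linearI) (auto simp: lin22_def algebra_simps)

lemma bounded_linear_lin22: "bounded_linear (lin22 a b c d)"
  using linear_lin22 linear_conv_bounded_linear by blast

definition mk :: "real \<Rightarrow> real \<Rightarrow> real \<Rightarrow> real \<Rightarrow> pt \<Rightarrow>\<^sub>L pt" where
  "mk a b c d = Blinfun (lin22 a b c d)"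

lemma mk_apply[simp]: "blinfun_apply (mk a b c d) = lin22 a b c d"
  unfolding mk_def using bounded_linear_lin22 by (rule bounded_linear_Blinfun_apply)

lemma mk_decomp: "mk a b c d = a *\<^sub>R mk 1 0 0 0 + b *\<^sub>R mk 0 1 0 0 + c *\<^sub>R mk 0 0 1 0 + d *\<^sub>R mk 0 0 0 1"
  by (rule blinfun_eqI) (simp add: lin22_def blinfun.add_left blinfun.scaleR_left)

lemma continuous_on_mk[continuous_intros]:
  assumes "continuous_on S a" "continuous_on S b" "continuous_on S c" "continuous_on S d"
  shows "continuous_on S (\<lambda>x. mk (a x) (b x) (c x) (d x))"
  by (subst mk_decomp) (intro continuous_intros assms)

lemma lin22_0[simp]: "lin22 a b c d 0 = 0" by (simp add: lin22_def zero_prod_def)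

lemma cramer1: assumes "D = a*d - b*c" "D \<noteq> 0"
  shows "a * ((d*x - b*y)/D) + b*((a*y - c*x)/D) = (x::real)"
    and "c * ((d*x - b*y)/D) + d*((a*y - c*x)/D) = (y::real)"
proof -
  have "a * ((d*x - b*y)/D) + b*((a*y - c*x)/D) = (a * (d*x - b*y) + b*(a*y - c*x))/D"
    by (simp add: add_divide_distrib)
  also have "a * (d*x - b*y) + b*(a*y - c*x) = D * x" unfolding assms(1) by (simp add: algebra_simps)
  finally show "a * ((d*x - b*y)/D) + b*((a*y - c*x)/D) = x" using assms(2) by simp
  have "c * ((d*x - b*y)/D) + d*((a*y - c*x)/D) = (c * (d*x - b*y) + d*(a*y - c*x))/D"
    by (simp add: add_divide_distrib)
  also have "c * (d*x - b*y) + d*(a*y - c*x) = D * y" unfolding assms(1) by (simp add: algebra_simps)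
  finally show "c * ((d*x - b*y)/D) + d*((a*y - c*x)/D) = y" using assms(2) by simp
qed

lemma dim_range_lin22:
  "dim (range (lin22 a b c d)) = (if a * d - b * c \<noteq> 0 then 2 else if a = 0 \<and> b = 0 \<and> c = 0 \<and> d = 0 then 0 else 1)"
proof -
  consider "a * d - b * c \<noteq> 0" | "a * d - b * c = 0" "a = 0 \<and> b = 0 \<and> c = 0 \<and> d = 0"
    | "a * d - b * c = 0" "\<not> (a = 0 \<and> b = 0 \<and> c = 0 \<and> d = 0)" by blast
  then show ?thesis
  proof cases
    case 1
    let ?D = "a * d - b * c"
    have "range (lin22 a b c d) = UNIV"
    proof (rule surjI)
      fix w :: pt
      show "lin22 a b c d ((d * fst w - b * snd w) / ?D, (a * snd w - c * fst w) / ?D) = w"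
        using cramer1[OF refl 1] by (simp add: lin22_def prod_eq_iff)
    qed
    then show ?thesis using 1 by (simp add: dim_UNIV)
  next
    case 2
    then have "range (lin22 a b c d) = {0}" by (auto simp: lin22_def zero_prod_def)

    then show ?thesis using 2 by (simp add: dim_singleton)
  next
    case 3
    define w where "w = (if (a, c) \<noteq> (0, 0) then (a, c) else (b, d))"
    have w0: "w \<noteq> 0" using 3 by (auto simp: w_def zero_prod_def)
    have "range (lin22 a b c d) = range (\<lambda>k. k *\<^sub>R w)"
    proof (cases "(a, c) \<noteq> (0, 0)")
      case True
      define m where "m = (a * b + c * d) / (a * a + c * c)"
      have s: "a * a + c * c \<noteq> 0" using True by (auto simp: add_nonneg_eq_0_iff)
      have bm: "b = m * a" using 3(1) s unfolding m_def
        by (simp add: field_simps)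
      have dm: "d = m * c" using 3(1) s unfolding m_def
        by (simp add: field_simps)
      show ?thesis
      proof (intro set_eqI iffI)
        fix z assume "z \<in> range (lin22 a b c d)"
        then obtain v where "z = lin22 a b c d v" by blast
        then have "z = (fst v + m * snd v) *\<^sub>R w" using True
          by (simp add: w_def lin22_def bm dm algebra_simps)
        then show "z \<in> range (\<lambda>k. k *\<^sub>R w)" by blast
      next
        fix z assume "z \<in> range (\<lambda>k. k *\<^sub>R w)"
        then obtain k where "z = k *\<^sub>R w" by blast
        then have "z = lin22 a b c d (k, 0)" using True by (simp add: w_def lin22_def mult.commute)
        then show "z \<in> range (lin22 a b c d)" by blast
      qed
    next
      case False
      then have ac: "a = 0" "c = 0" by auto
      show ?thesis
      proof (intro set_eqI iffI)
        fix z assume "z \<in> range (lin22 a b c d)"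
        then obtain v where "z = lin22 a b c d v" by blast
        then have "z = snd v *\<^sub>R w" using False ac by (simp add: w_def lin22_def mult.commute)
        then show "z \<in> range (\<lambda>k. k *\<^sub>R w)" by blast
      next
        fix z assume "z \<in> range (\<lambda>k. k *\<^sub>R w)"
        then obtain k where "z = k *\<^sub>R w" by blast
        then have "z = lin22 a b c d (0, k)" using False ac by (simp add: w_def lin22_def mult.commute)
        then show "z \<in> range (lin22 a b c d)" by blast
      qed
    qed
    also have "\<dots> = span {w}" by (simp add: span_singleton)
    finally have "dim (range (lin22 a b c d)) = 1" using w0 by (simp add: dim_span dim_singleton)
    then show ?thesis using 3 by simp
  qed
qed


lemma lin_has_derivative: "((\<lambda>q::pt. t1 * fst q + t2 * snd q) has_derivative (\<lambda>v. t1 * fst v + t2 * snd v)) (at p)"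
proof -
  have "bounded_linear (\<lambda>q::pt. t1 * fst q + t2 * snd q)"
    using bounded_linear_lin22[of t1 t2 0 0] unfolding lin22_def
    by (intro bounded_linear_add bounded_linear_compose[OF bounded_linear_mult_right] bounded_linear_fst bounded_linear_snd)
  then show ?thesis by (rule bounded_linear_imp_has_derivative)
qed

lemma inv22_aux:
  fixes nn t1 t2 A B x y :: real
  assumes "nn \<noteq> 0" "t2*A - B*t1 = nn"
  shows "(t2/nn)*(A*x + B*y) + (-B/nn)*(t1*x+t2*y) = x"
    and "(-t1/nn)*(A*x+B*y) + (A/nn)*(t1*x+t2*y) = y"
proof -
  have "(t2/nn)*(A*x + B*y) + (-B/nn)*(t1*x+t2*y) = (t2*(A*x + B*y) - B*(t1*x+t2*y))/nn"
    using assms(1) by (simp add: field_simps)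
  also have "t2*(A*x + B*y) - B*(t1*x+t2*y) = (t2*A - B*t1)*x" by (simp add: algebra_simps)
  finally show "(t2/nn)*(A*x + B*y) + (-B/nn)*(t1*x+t2*y) = x" using assms by simp
  have "(-t1/nn)*(A*x+B*y) + (A/nn)*(t1*x+t2*y) = (A*(t1*x+t2*y) - t1*(A*x+B*y))/nn"
    using assms(1) by (simp add: field_simps)
  also have "A*(t1*x+t2*y) - t1*(A*x+B*y) = (t2*A - B*t1)*y" by (simp add: algebra_simps)
  finally show "(-t1/nn)*(A*x+B*y) + (A/nn)*(t1*x+t2*y) = y" using assms by simp
qed

lemma local_param:
  fixes Q :: "real poly poly" and p :: pt and W :: "pt set"
  assumes Q0: "ev Q p = 0" and grad: "(ev (dxP Q) p, ev (dyP Q) p) \<noteq> (0, 0)" and W: "open W" "p \<in> W"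
  shows "\<exists>U r \<gamma> \<gamma>'. open U \<and> p \<in> U \<and> U \<subseteq> W \<and> r > 0 \<and> \<gamma> 0 = p \<and> inj_on \<gamma> (ball 0 r) \<and>
     \<gamma> ` ball 0 r = U \<inter> {q. ev Q q = 0} \<and>
     (\<forall>t\<in>ball 0 r. (\<gamma> has_vector_derivative \<gamma>' t) (at t) \<and> \<gamma>' t \<noteq> 0) \<and>
     continuous_on (ball 0 r) \<gamma>' \<and>
     \<gamma>' 0 = (1 / ((ev (dxP Q) p)\<^sup>2 + (ev (dyP Q) p)\<^sup>2)) *\<^sub>R (- ev (dyP Q) p, ev (dxP Q) p)"
proof -
  define Jx where "Jx = ev (dxP Q)"
  define Jy where "Jy = ev (dyP Q)"
  define t1 where "t1 = - Jy p"
  define t2 where "t2 = Jx p"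
  define nn where "nn = (Jx p)\<^sup>2 + (Jy p)\<^sup>2"
  have nn0: "nn > 0" using grad unfolding nn_def Jx_def Jy_def
    by (auto simp: sum_power2_gt_zero_iff)
  have tau0: "(t2, - t1) \<noteq> 0" using grad by (auto simp: t1_def t2_def Jx_def Jy_def zero_prod_def)
  define \<Phi> where "\<Phi> = (\<lambda>q. (ev Q q, t1 * fst q + t2 * snd q))"
  define \<Phi>' where "\<Phi>' = (\<lambda>q. mk (Jx q) (Jy q) t1 t2)"
  define invf where "invf = mk (t2 / nn) (- Jy p / nn) (- t1 / nn) (Jx p / nn)"
  have derf: "(\<Phi> has_derivative blinfun_apply (\<Phi>' x)) (at x)" for x
  proof -
    have "(\<Phi> has_derivative (\<lambda>v. (Jx x * fst v + Jy x * snd v, t1 * fst v + t2 * snd v))) (at x)"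
      unfolding \<Phi>_def Jx_def Jy_def by (intro has_derivative_Pair ev_has_derivative lin_has_derivative)
    then show ?thesis by (simp add: \<Phi>'_def lin22_def[abs_def])
  qed
  have contf: "continuous_on W \<Phi>'" unfolding \<Phi>'_def Jx_def Jy_def by (intro continuous_intros)
  have invf: "invf o\<^sub>L \<Phi>' p = id_blinfun"
  proof (rule blinfun_eqI)
    fix v :: pt
    have "t2 * Jx p - Jy p * t1 = nn" by (simp add: nn_def t1_def t2_def power2_eq_square)
    note h = inv22_aux[OF _ this, of "fst v" "snd v"]
    show "blinfun_apply (invf o\<^sub>L \<Phi>' p) v = blinfun_apply id_blinfun v"
      using nn0 h by (simp add: invf_def \<Phi>'_def lin22_def prod_eq_iff)
  qed
  obtain U' V g g' where U': "open U'" "U' \<subseteq> W" "p \<in> U'" and V: "open V" "\<Phi> p \<in> V"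
    and hom: "homeomorphism U' V \<Phi> g"
    and derg: "\<And>y. y \<in> V \<Longrightarrow> (g has_derivative (g' y)) (at y)"
    and g': "\<And>y. y \<in> V \<Longrightarrow> g' y = inv (blinfun_apply (\<Phi>' (g y)))"
    and bij: "\<And>y. y \<in> V \<Longrightarrow> bij (blinfun_apply (\<Phi>' (g y)))"
    using inverse_function_theorem[OF W(1) derf contf W(2) invf] by metis
  obtain r where r: "r > 0" "ball (\<Phi> p) r \<subseteq> V" using V open_contains_ball by blast
  define c0 where "c0 = t1 * fst p + t2 * snd p"
  have Phip: "\<Phi> p = (0, c0)" using Q0 by (simp add: \<Phi>_def c0_def)
  define U where "U = U' \<inter> \<Phi> -` ball (\<Phi> p) r"
  have contPhi: "continuous_on U' \<Phi>" using hom by (simp add: homeomorphism_def)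
  have contg: "continuous_on V g" using hom by (simp add: homeomorphism_def)
  have gPhi: "\<And>x. x \<in> U' \<Longrightarrow> g (\<Phi> x) = x" and Phig: "\<And>y. y \<in> V \<Longrightarrow> \<Phi> (g y) = y"
    and gV: "\<And>y. y \<in> V \<Longrightarrow> g y \<in> U'"
    using hom by (auto simp: homeomorphism_def)
  have openU: "open U" unfolding U_def
    using contPhi U'(1) by (metis continuous_on_open_vimage open_ball inf_commute)
  have pU: "p \<in> U" using U' r by (simp add: U_def)
  define l where "l = (\<lambda>t::real. (0::real, c0 + t))"
  have lball: "l t \<in> ball (\<Phi> p) r" if "t \<in> ball 0 r" for t
    using that by (simp add: l_def Phip dist_Pair_Pair dist_real_def)
  have lV: "l t \<in> V" if "t \<in> ball 0 r" for t using lball[OF that] r by blast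
  define \<gamma> where "\<gamma> = (\<lambda>t. g (l t))"
  define \<gamma>' where "\<gamma>' = (\<lambda>t. g' (l t) (0, 1))"
  have g0: "\<gamma> 0 = p" unfolding \<gamma>_def l_def using gPhi[OF U'(3)] Phip by simp
  have Phigam: "\<Phi> (\<gamma> t) = l t" if "t \<in> ball 0 r" for t unfolding \<gamma>_def using Phig[OF lV[OF that]] .
  have inj: "inj_on \<gamma> (ball 0 r)"
  proof (rule inj_onI)
    fix s t assume "s \<in> ball 0 r" "t \<in> ball 0 r" "\<gamma> s = \<gamma> t"
    then have "l s = l t" using Phigam by metis
    then show "s = t" by (simp add: l_def)
  qed
  have img: "\<gamma> ` ball 0 r = U \<inter> {q. ev Q q = 0}"
  proof (intro set_eqI iffI)
    fix q assume "q \<in> \<gamma> ` ball 0 r"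
    then obtain t where t: "t \<in> ball 0 r" "q = \<gamma> t" by blast
    have "q \<in> U'" using gV[OF lV[OF t(1)]] t(2) by (simp add: \<gamma>_def)
    moreover have "\<Phi> q = l t" using Phigam[OF t(1)] t(2) by simp
    ultimately show "q \<in> U \<inter> {q. ev Q q = 0}" using lball[OF t(1)]
      by (simp add: U_def l_def \<Phi>_def)
  next
    fix q assume q: "q \<in> U \<inter> {q. ev Q q = 0}"
    define t where "t = t1 * fst q + t2 * snd q - c0"
    have "\<Phi> q = l t" using q by (simp add: \<Phi>_def l_def t_def)
    moreover have "\<Phi> q \<in> ball (\<Phi> p) r" using q by (simp add: U_def)
    ultimately have t: "t \<in> ball 0 r"
      by (simp add: l_def Phip dist_Pair_Pair dist_real_def)
    have "\<gamma> t = q" unfolding \<gamma>_def using gPhi[of q] q \<open>\<Phi> q = l t\<close> by (simp add: U_def)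
    then show "q \<in> \<gamma> ` ball 0 r" using t by blast
  qed
  have lder: "(l has_vector_derivative (0, 1)) (at t)" for t
    unfolding l_def has_vector_derivative_def
    by (rule has_derivative_eq_rhs[OF has_derivative_Pair[OF has_derivative_const has_derivative_add[OF has_derivative_const has_derivative_ident]]]) (auto simp: fun_eq_iff)
  have gamder: "(\<gamma> has_vector_derivative \<gamma>' t) (at t)" if "t \<in> ball 0 r" for t
  proof -
    have d: "(g has_derivative g' (l t)) (at (l t))" using derg[OF lV[OF that]] .
    have lin: "linear (g' (l t))" using d has_derivative_linear by blast
    have "((\<lambda>t. g (l t)) has_derivative (\<lambda>h. g' (l t) (h *\<^sub>R (0, 1)))) (at t)"
      using has_derivative_compose[OF lder[unfolded has_vector_derivative_def] d] by (simp add: o_def)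
    moreover have "(\<lambda>h. g' (l t) (h *\<^sub>R (0, 1))) = (\<lambda>h. h *\<^sub>R g' (l t) (0, 1))"
      using linear_scale[OF lin] by blast
    ultimately show ?thesis unfolding has_vector_derivative_def \<gamma>_def \<gamma>'_def by simp
  qed
  define dt where "dt = (\<lambda>q. Jx q * t2 - Jy q * t1)"
  have explicit: "\<gamma>' t = (1 / dt (\<gamma> t)) *\<^sub>R (- Jy (\<gamma> t), Jx (\<gamma> t)) \<and> dt (\<gamma> t) \<noteq> 0 \<and> \<gamma>' t \<noteq> 0"
    if "t \<in> ball 0 r" for t
  proof -
    let ?q = "\<gamma> t"
    let ?M = "blinfun_apply (\<Phi>' (g (l t)))"
    have M: "?M = lin22 (Jx ?q) (Jy ?q) t1 t2" by (simp add: \<Phi>'_def \<gamma>_def)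
    have bM: "bij ?M" using bij[OF lV[OF that]] .
    have "?M (\<gamma>' t) = (0, 1)" unfolding \<gamma>'_def g'[OF lV[OF that]]
      using bM by (simp add: bij_is_surj surj_f_inv_f)
    then have e1: "Jx ?q * fst (\<gamma>' t) + Jy ?q * snd (\<gamma>' t) = 0"
      and e2: "t1 * fst (\<gamma>' t) + t2 * snd (\<gamma>' t) = 1" by (simp_all add: M lin22_def)
    have d0: "dt ?q \<noteq> 0"
    proof
      assume "dt ?q = 0"
      then have "?M (t2, - t1) = ?M 0" by (simp add: M lin22_def dt_def algebra_simps)
      then have "(t2, - t1) = 0" using bM by (meson bij_is_inj injD)
      then show False using tau0 by simp
    qed
    have a1: "Jx ?q * fst (\<gamma>' t) = - (Jy ?q * snd (\<gamma>' t))" using e1 by linarith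
    have a2: "t1 * fst (\<gamma>' t) = 1 - t2 * snd (\<gamma>' t)" using e2 by linarith
    have a3: "Jy ?q * snd (\<gamma>' t) = - (Jx ?q * fst (\<gamma>' t))" using e1 by linarith
    have a4: "t2 * snd (\<gamma>' t) = 1 - t1 * fst (\<gamma>' t)" using e2 by linarith
    have z1: "dt ?q * fst (\<gamma>' t) = - Jy ?q"
    proof -
      have "dt ?q * fst (\<gamma>' t) = t2 * (Jx ?q * fst (\<gamma>' t)) - Jy ?q * (t1 * fst (\<gamma>' t))"
        by (simp add: dt_def algebra_simps)
      also have "\<dots> = t2 * (- (Jy ?q * snd (\<gamma>' t))) - Jy ?q * (1 - t2 * snd (\<gamma>' t))"
        by (simp only: a1 a2)
      finally show ?thesis by (simp add: algebra_simps)
    qed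
    have z2: "dt ?q * snd (\<gamma>' t) = Jx ?q"
    proof -
      have "dt ?q * snd (\<gamma>' t) = Jx ?q * (t2 * snd (\<gamma>' t)) - t1 * (Jy ?q * snd (\<gamma>' t))"
        by (simp add: dt_def algebra_simps)
      also have "\<dots> = Jx ?q * (1 - t1 * fst (\<gamma>' t)) - t1 * (- (Jx ?q * fst (\<gamma>' t)))"
        by (simp only: a3 a4)
      finally show ?thesis by (simp add: algebra_simps)
    qed
    have "\<gamma>' t = (1 / dt ?q) *\<^sub>R (- Jy ?q, Jx ?q)"
      using z1 z2 d0 by (simp add: prod_eq_iff field_simps)
    moreover have "\<gamma>' t \<noteq> 0" using e2 by (auto simp: zero_prod_def)
    ultimately show ?thesis using d0 by blast
  qed
  have contgam: "continuous_on (ball 0 r) \<gamma>"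
  proof -
    have "continuous_on (ball 0 r) l" unfolding l_def by (intro continuous_intros)
    moreover have "l ` ball 0 r \<subseteq> V" using lV by blast
    ultimately show ?thesis unfolding \<gamma>_def using continuous_on_compose2[OF contg] by blast
  qed
  have contJx: "continuous_on (ball 0 r) (\<lambda>t. Jx (\<gamma> t))"
    using continuous_on_compose2[OF ev_cont[of UNIV] contgam] unfolding Jx_def by blast
  have contJy: "continuous_on (ball 0 r) (\<lambda>t. Jy (\<gamma> t))"
    using continuous_on_compose2[OF ev_cont[of UNIV] contgam] unfolding Jy_def by blast
  have contd: "continuous_on (ball 0 r) \<gamma>'"
  proof (rule continuous_on_eq[of _ "\<lambda>t. (1 / dt (\<gamma> t)) *\<^sub>R (- Jy (\<gamma> t), Jx (\<gamma> t))"])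
    show "continuous_on (ball 0 r) (\<lambda>t. (1 / dt (\<gamma> t)) *\<^sub>R (- Jy (\<gamma> t), Jx (\<gamma> t)))"
      unfolding dt_def using explicit unfolding dt_def
      by (intro continuous_intros contJx contJy) auto
    show "\<And>t. t \<in> ball 0 r \<Longrightarrow> (1 / dt (\<gamma> t)) *\<^sub>R (- Jy (\<gamma> t), Jx (\<gamma> t)) = \<gamma>' t"
      using explicit by metis
  qed
  have d00: "\<gamma>' 0 = (1 / nn) *\<^sub>R (t1, t2)"
  proof -
    have "dt p = nn" by (simp add: dt_def nn_def t1_def t2_def power2_eq_square)
    then show ?thesis using explicit[of 0] r g0 by (simp add: t1_def t2_def)
  qed
  have "U \<subseteq> W" using U' by (auto simp: U_def)
  have dd: "\<forall>t\<in>ball 0 r. (\<gamma> has_vector_derivative \<gamma>' t) (at t) \<and> \<gamma>' t \<noteq> 0"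
    using gamder explicit by blast
  have d00': "\<gamma>' 0 = (1 / ((ev (dxP Q) p)\<^sup>2 + (ev (dyP Q) p)\<^sup>2)) *\<^sub>R (- ev (dyP Q) p, ev (dxP Q) p)"
    using d00 by (simp only: nn_def t1_def t2_def Jx_def Jy_def)
  show ?thesis
    using openU pU \<open>U \<subseteq> W\<close> r(1) g0 inj img dd contd d00' by blast
qed


lemma perp2:
  fixes A B :: real and v :: pt
  assumes "A * fst v + B * snd v = 0" "A\<^sup>2 + B\<^sup>2 \<noteq> 0"
  shows "v = ((- B * fst v + A * snd v) / (A\<^sup>2 + B\<^sup>2)) *\<^sub>R (- B, A)"
proof -
  have b: "B * snd v = - (A * fst v)" using assms(1) by linarith
  have a: "A * fst v = - (B * snd v)" using assms(1) by linarith
  have "(- B * fst v + A * snd v) * (- B) = (A\<^sup>2 + B\<^sup>2) * fst v"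
  proof -
    have "(- B * fst v + A * snd v) * (- B) = B * B * fst v - A * (B * snd v)" by (simp add: algebra_simps)
    also have "\<dots> = (A\<^sup>2 + B\<^sup>2) * fst v" unfolding b by (simp add: algebra_simps power2_eq_square)
    finally show ?thesis .
  qed
  moreover have "(- B * fst v + A * snd v) * A = (A\<^sup>2 + B\<^sup>2) * snd v"
  proof -
    have "(- B * fst v + A * snd v) * A = - B * (A * fst v) + A * A * snd v" by (simp add: algebra_simps)
    also have "\<dots> = (A\<^sup>2 + B\<^sup>2) * snd v" unfolding a by (simp add: algebra_simps power2_eq_square)
    finally show ?thesis .
  qed
  ultimately show ?thesis using assms(2) by (simp add: prod_eq_iff field_simps)
qed

lemma tangent_level:
  fixes Q :: "real poly poly" and p :: pt
  assumes Q0: "ev Q p = 0" and grad: "(ev (dxP Q) p, ev (dyP Q) p) \<noteq> (0, 0)"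
  shows "tangent_set {q. ev Q q = 0} p = {v. ev (dxP Q) p * fst v + ev (dyP Q) p * snd v = 0}"
proof (intro set_eqI iffI)
  fix v assume "v \<in> tangent_set {q. ev Q q = 0} p"
  then obtain c e where ce: "e > 0" "c 0 = p" "\<forall>t\<in>ball 0 e. c t \<in> {q. ev Q q = 0}"
    "(c has_vector_derivative v) (at 0)" unfolding tangent_set_def by blast
  let ?D = "ev (dxP Q) p * fst v + ev (dyP Q) p * snd v"
  have "((\<lambda>t. ev Q (c t)) has_derivative (\<lambda>t. ev (dxP Q) p * fst (t *\<^sub>R v) + ev (dyP Q) p * snd (t *\<^sub>R v))) (at 0)"
    using has_derivative_compose[OF ce(4)[unfolded has_vector_derivative_def] ev_has_derivative[of Q "c 0"]]
    ce(2) by (simp add: o_def)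
  then have "((\<lambda>t. ev Q (c t)) has_real_derivative ?D) (at 0)"
    unfolding has_field_derivative_def
    by (rule has_derivative_eq_rhs) (auto simp: fun_eq_iff algebra_simps)
  then have "((\<lambda>t. 0::real) has_real_derivative ?D) (at 0)"
    by (rule has_field_derivative_transform_within_open[of _ _ _ "ball 0 e"]) (use ce in auto)
  then have "?D = 0" using DERIV_const DERIV_unique by blast
  then show "v \<in> {v. ev (dxP Q) p * fst v + ev (dyP Q) p * snd v = 0}" by simp
next
  fix v assume v: "v \<in> {v. ev (dxP Q) p * fst v + ev (dyP Q) p * snd v = 0}"
  let ?A = "ev (dxP Q) p" and ?B = "ev (dyP Q) p"
  define nn where "nn = ?A\<^sup>2 + ?B\<^sup>2"
  have nn0: "nn > 0" using grad by (auto simp: nn_def sum_power2_gt_zero_iff)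
  define s where "s = (- ?B * fst v + ?A * snd v) / nn"
  have v': "?A * fst v + ?B * snd v = 0" using v by simp
  have nn0': "?A\<^sup>2 + ?B\<^sup>2 \<noteq> 0" using nn0 nn_def by (metis order_less_irrefl)
  have vs: "v = s *\<^sub>R (- ?B, ?A)" unfolding s_def nn_def by (rule perp2[OF v' nn0'])
  obtain U r \<gamma> \<gamma>' where P: "open U" "p \<in> U" "r > 0" "\<gamma> 0 = p" "\<gamma> ` ball 0 r = U \<inter> {q. ev Q q = 0}"
     "\<forall>t\<in>ball 0 r. (\<gamma> has_vector_derivative \<gamma>' t) (at t) \<and> \<gamma>' t \<noteq> 0"
     "\<gamma>' 0 = (1 / nn) *\<^sub>R (- ?B, ?A)"
    using local_param[OF Q0 grad, of UNIV] unfolding nn_def by blast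
  define k where "k = nn * s"
  define e where "e = r / (nn * \<bar>s\<bar> + 1)"
  have den: "nn * \<bar>s\<bar> + 1 > 0" using nn0 by (metis add_pos_nonneg zero_less_one mult_nonneg_nonneg abs_ge_zero less_imp_le add.commute)
  have e0: "e > 0" using P(3) den by (simp add: e_def)
  have inS: "\<gamma> (k * t) \<in> {q. ev Q q = 0}" if "t \<in> ball 0 e" for t
  proof -
    have "\<bar>t\<bar> < e" using that by simp
    have "\<bar>k * t\<bar> = nn * \<bar>s\<bar> * \<bar>t\<bar>" using nn0 by (simp add: k_def abs_mult)
    also have "\<dots> \<le> nn * \<bar>s\<bar> * e" using \<open>\<bar>t\<bar> < e\<close> nn0 by (intro mult_left_mono) auto
    also have "\<dots> < r" unfolding e_def using P(3) den
      by (simp add: field_simps)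
    finally have "k * t \<in> ball 0 r" by simp
    then show ?thesis using P(5) by blast
  qed
  have der: "((\<gamma> \<circ> (\<lambda>t. k * t)) has_vector_derivative (k *\<^sub>R \<gamma>' 0)) (at 0)"
  proof (rule vector_diff_chain_at)
    show "((*) k has_vector_derivative k) (at 0)"
      using has_real_derivative_iff_has_vector_derivative DERIV_cmult_Id by blast
    show "(\<gamma> has_vector_derivative \<gamma>' 0) (at (k * 0))" using P(3,6) by simp
  qed
  have "k *\<^sub>R \<gamma>' 0 = v" using nn0 by (simp add: P(7) k_def vs)
  then show "v \<in> tangent_set {q. ev Q q = 0} p"
    unfolding tangent_set_def using e0 inS der P(4)
    by (intro CollectI exI[of _ "\<gamma> \<circ> (\<lambda>t. k * t)"] exI[of _ e]) auto
qed


lemma ev_chain: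
  assumes "(c has_vector_derivative v) (at t)"
  shows "((\<lambda>t. ev Q (c t)) has_real_derivative (ev (dxP Q) (c t) * fst v + ev (dyP Q) (c t) * snd v)) (at t)"
proof -
  have "((\<lambda>t. ev Q (c t)) has_derivative (\<lambda>h. ev (dxP Q) (c t) * fst (h *\<^sub>R v) + ev (dyP Q) (c t) * snd (h *\<^sub>R v))) (at t)"
    using has_derivative_compose[OF assms[unfolded has_vector_derivative_def] ev_has_derivative[of Q "c t"]]
    by (simp add: o_def)
  then show ?thesis unfolding has_field_derivative_def
    by (rule has_derivative_eq_rhs) (auto simp: fun_eq_iff algebra_simps)
qed

lemma dxP_diff: "dxP (A - B) = dxP A - dxP B"
  by (rule poly_eqI) (simp add: dxP_def coeff_map_poly pderiv_diff)

lemma ev_dxP_mult: "ev (dxP (A * B)) p = ev (dxP A) p * ev B p + ev A p * ev (dxP B) p"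
proof -
  have "ev (A * B) = (\<lambda>q. ev A q * ev B q)" by (rule ext) simp
  then have "px (ev (A * B)) p = px (\<lambda>q. ev A q * ev B q) p" by simp
  then show ?thesis by (simp add: px_ev px_mult_ev)
qed

lemma ev_dyP_mult: "ev (dyP (A * B)) p = ev (dyP A) p * ev B p + ev A p * ev (dyP B) p"
  by (simp add: dyP_def pderiv_mult algebra_simps)

lemma ev_dyP_diff: "dyP (A - B) = dyP A - dyP B" by (simp add: dyP_def pderiv_diff)

definition cov :: "real \<Rightarrow> real \<Rightarrow> pt \<Rightarrow>\<^sub>L real" where
  "cov a b = Blinfun (\<lambda>v. a * fst v + b * snd v)"

lemma bounded_linear_cov: "bounded_linear (\<lambda>v::pt. a * fst v + b * snd v)"
  by (intro bounded_linear_add bounded_linear_compose[OF bounded_linear_mult_right] bounded_linear_fst bounded_linear_snd)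

lemma cov_apply[simp]: "blinfun_apply (cov a b) = (\<lambda>v. a * fst v + b * snd v)"
  unfolding cov_def using bounded_linear_cov by (rule bounded_linear_Blinfun_apply)

lemma cov_decomp: "cov a b = a *\<^sub>R cov 1 0 + b *\<^sub>R cov 0 1"
  by (rule blinfun_eqI) (simp add: blinfun.add_left blinfun.scaleR_left)

lemma continuous_on_cov[continuous_intros]:
  assumes "continuous_on S a" "continuous_on S b"
  shows "continuous_on S (\<lambda>x. cov (a x) (b x))"
  by (subst cov_decomp) (intro continuous_intros assms)

locale setting =
  fixes f :: "pt \<Rightarrow> pt" and P1 P2 :: "real poly poly" and g1 g2 g3 g4 g5 :: "pt \<Rightarrow> real"
  assumes c1: "comp1 f = ev P1" and c2: "comp2 f = ev P2"
    and ideal: "\<And>p. g1 p * Jdet f p + g2 p * F1 f p + g3 p * F2 f p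
              + g4 p * jac (Jdet f) (F1 f) p + g5 p * jac (Jdet f) (F2 f) p = 1"
begin

definition "PJ = jacP P1 P2"
definition "QF1 = jacP PJ P1"
definition "QF2 = jacP PJ P2"
definition "a = ev (dxP P1)"
definition "b = ev (dyP P1)"
definition "c = ev (dxP P2)"
definition "d = ev (dyP P2)"
definition "Jx = ev (dxP PJ)"
definition "Jy = ev (dyP PJ)"

lemma Jdet_ev: "Jdet f = ev PJ" by (simp add: Jdet_def c1 c2 jac_ev PJ_def)
lemma F1_ev: "F1 f = ev QF1" by (simp add: F1_def Fi_def Jdet_ev c1 jac_ev QF1_def)
lemma F2_ev: "F2 f = ev QF2" by (simp add: F2_def Fi_def Jdet_ev c2 jac_ev QF2_def)

lemma f_eq: "f = (\<lambda>p. (ev P1 p, ev P2 p))"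
proof (rule ext)
  fix p show "f p = (ev P1 p, ev P2 p)"
    using c1 c2 unfolding comp1_def comp2_def by (metis prod.collapse)
qed

lemma f_deriv: "(f has_derivative lin22 (a p) (b p) (c p) (d p)) (at p)"
proof -
  have "((\<lambda>p. (ev P1 p, ev P2 p)) has_derivative (\<lambda>v. (ev (dxP P1) p * fst v + ev (dyP P1) p * snd v,
      ev (dxP P2) p * fst v + ev (dyP P2) p * snd v))) (at p)"
    by (intro has_derivative_Pair ev_has_derivative)
  then show ?thesis by (simp add: f_eq[symmetric] lin22_def[abs_def] a_def b_def c_def d_def)
qed

lemma Df_eq: "Df f p = lin22 (a p) (b p) (c p) (d p)"
  unfolding Df_def using f_deriv frechet_derivative_at by metis

lemma J_abcd: "ev PJ p = a p * d p - b p * c p"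
  by (simp add: PJ_def jacP_def a_def b_def c_def d_def)

lemma F1_val: "ev QF1 p = Jx p * b p - Jy p * a p"
  by (simp add: QF1_def jacP_def Jx_def Jy_def a_def b_def)
lemma F2_val: "ev QF2 p = Jx p * d p - Jy p * c p"
  by (simp add: QF2_def jacP_def Jx_def Jy_def c_def d_def)

lemma jac1_val: "jac (Jdet f) (F1 f) p = Jx p * ev (dyP QF1) p - Jy p * ev (dxP QF1) p"
  by (simp add: jac_def Jdet_ev F1_ev px_ev py_ev Jx_def Jy_def)
lemma jac2_val: "jac (Jdet f) (F2 f) p = Jx p * ev (dyP QF2) p - Jy p * ev (dxP QF2) p"
  by (simp add: jac_def Jdet_ev F2_ev px_ev py_ev Jx_def Jy_def)

lemma grad_nz: assumes "ev PJ p = 0" shows "(Jx p, Jy p) \<noteq> (0, 0)"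
proof
  assume "(Jx p, Jy p) = (0, 0)"
  then have z: "Jx p = 0" "Jy p = 0" by auto
  have "g1 p * Jdet f p + g2 p * F1 f p + g3 p * F2 f p
              + g4 p * jac (Jdet f) (F1 f) p + g5 p * jac (Jdet f) (F2 f) p = 0"
    unfolding jac1_val jac2_val using assms z by (simp add: Jdet_ev F1_ev F2_ev F1_val F2_val)
  then show False using ideal[of p] by simp
qed

lemma no_corank2: "\<not> (a p = 0 \<and> b p = 0 \<and> c p = 0 \<and> d p = 0)"
proof
  assume z: "a p = 0 \<and> b p = 0 \<and> c p = 0 \<and> d p = 0"
  then have "ev PJ p = 0" by (simp add: J_abcd)
  moreover have "Jx p = 0" using z
    by (simp add: Jx_def PJ_def jacP_def dxP_diff ev_dxP_mult a_def b_def c_def d_def)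
  moreover have "Jy p = 0" using z
    by (simp add: Jy_def PJ_def jacP_def ev_dyP_diff ev_dyP_mult a_def b_def c_def d_def)
  ultimately show False using grad_nz by auto
qed

lemma corank_eq: "corank f p = (if ev PJ p \<noteq> 0 then 0 else 1)"
  using no_corank2[of p]
  by (simp add: corank_def Df_eq dim_range_lin22 J_abcd)

lemma S1_eq: "Sr f 1 = {q. ev PJ q = 0}"
  by (auto simp: Sr_def corank_eq)

lemma ker_eq: "kerDf f p = {v. lin22 (a p) (b p) (c p) (d p) v = 0}"
  by (simp add: kerDf_def Df_eq)

lemma tangent_S1: assumes "ev PJ p = 0"
  shows "tangent_set (Sr f 1) p = {v. Jx p * fst v + Jy p * snd v = 0}"
  unfolding S1_eq Jx_def Jy_def
  by (rule tangent_level[OF assms]) (use grad_nz[OF assms] in \<open>simp add: Jx_def Jy_def\<close>)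

lemma eta1_ker: "ev PJ p = 0 \<Longrightarrow> lin22 (a p) (b p) (c p) (d p) (b p, - a p) = 0"
  by (simp add: lin22_def J_abcd zero_prod_def algebra_simps)
lemma eta2_ker: "ev PJ p = 0 \<Longrightarrow> lin22 (a p) (b p) (c p) (d p) (d p, - c p) = 0"
  by (simp add: lin22_def J_abcd zero_prod_def algebra_simps)

lemma fold:
  assumes J0: "ev PJ p = 0" and F: "ev QF1 p \<noteq> 0 \<or> ev QF2 p \<noteq> 0"
  shows "fold_point f p"
proof -
  obtain \<eta> where eta: "lin22 (a p) (b p) (c p) (d p) \<eta> = 0" "Jx p * fst \<eta> + Jy p * snd \<eta> \<noteq> 0"
  proof (cases "ev QF1 p \<noteq> 0")
    case True
    then show ?thesis using that[of "(b p, - a p)"] eta1_ker[OF J0] by (simp add: F1_val)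
  next
    case False
    then have "ev QF2 p \<noteq> 0" using F by simp
    then show ?thesis using that[of "(d p, - c p)"] eta2_ker[OF J0] by (simp add: F2_val)
  qed
  define t1 where "t1 = - Jy p"
  define t2 where "t2 = Jx p"
  define D where "D = t1 * snd \<eta> - fst \<eta> * t2"
  have D0: "D \<noteq> 0" using eta(2) by (simp add: D_def t1_def t2_def algebra_simps)
  have "setsum (tangent_set (Sr f 1) p) (kerDf f p) = UNIV"
  proof (intro set_eqI iffI UNIV_I)
    fix w :: pt
    define al where "al = (snd \<eta> * fst w - fst \<eta> * snd w) / D"
    define be where "be = (t1 * snd w - t2 * fst w) / D"
    have "w = al *\<^sub>R (t1, t2) + be *\<^sub>R \<eta>"
      using cramer1[OF D_def D0, of "fst w" "snd w"]
      by (simp add: prod_eq_iff al_def be_def algebra_simps)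
    moreover have "al *\<^sub>R (t1, t2) \<in> tangent_set (Sr f 1) p"
      unfolding tangent_S1[OF J0] by (simp add: t1_def t2_def algebra_simps)
    moreover have "be *\<^sub>R \<eta> \<in> kerDf f p"
      using eta(1) linear_scale[OF linear_lin22] by (simp add: ker_eq)
    ultimately show "w \<in> setsum (tangent_set (Sr f 1) p) (kerDf f p)"
      unfolding setsum_def by blast
  qed
  moreover have "p \<in> Sr f 1" unfolding S1_eq using J0 by simp
  ultimately show ?thesis by (simp add: fold_point_def)
qed

end


lemma choose_ab:
  fixes A B a b c d :: real
  assumes "A \<noteq> 0 \<or> B \<noteq> 0" "\<not> (a = 0 \<and> b = 0 \<and> c = 0 \<and> d = 0)"
  shows "\<exists>al be. al * A + be * B \<noteq> 0 \<and> (al * b + be * d \<noteq> 0 \<or> al * a + be * c \<noteq> 0)"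
proof -
  have "(A \<noteq> 0 \<and> (b \<noteq> 0 \<or> a \<noteq> 0)) \<or> (B \<noteq> 0 \<and> (d \<noteq> 0 \<or> c \<noteq> 0)) \<or> (A + B \<noteq> 0 \<and> (b + d \<noteq> 0 \<or> a + c \<noteq> 0))"
    using assms by auto
  then show ?thesis
  proof (elim disjE)
    assume "A \<noteq> 0 \<and> (b \<noteq> 0 \<or> a \<noteq> 0)" then show ?thesis by (intro exI[of _ 1] exI[of _ 0]) simp
  next
    assume "B \<noteq> 0 \<and> (d \<noteq> 0 \<or> c \<noteq> 0)" then show ?thesis by (intro exI[of _ 0] exI[of _ 1]) simp
  next
    assume "A + B \<noteq> 0 \<and> (b + d \<noteq> 0 \<or> a + c \<noteq> 0)" then show ?thesis by (intro exI[of _ 1] exI[of _ 1]) simp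
  qed
qed


context setting begin

lemma tangent_eq_ker:
  assumes J0: "ev PJ p = 0" and F10: "ev QF1 p = 0" and F20: "ev QF2 p = 0"
  shows "tangent_set (Sr f 1) p = kerDf f p"
proof -
  have nz: "\<not> (a p = 0 \<and> b p = 0 \<and> c p = 0 \<and> d p = 0)" by (rule no_corank2)
  have g: "(Jx p)\<^sup>2 + (Jy p)\<^sup>2 \<noteq> 0" using grad_nz[OF J0] by (auto simp: add_nonneg_eq_0_iff)
  obtain \<eta> where eta: "\<eta> \<noteq> 0" "lin22 (a p) (b p) (c p) (d p) \<eta> = 0" "Jx p * fst \<eta> + Jy p * snd \<eta> = 0"
  proof (cases "a p = 0 \<and> b p = 0")
    case True
    then have "(d p, - c p) \<noteq> 0" using nz by (auto simp: zero_prod_def)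
    then show ?thesis using that eta2_ker[OF J0] F20 by (simp add: F2_val)
  next
    case False
    then have "(b p, - a p) \<noteq> 0" by (auto simp: zero_prod_def)
    then show ?thesis using that eta1_ker[OF J0] F10 by (simp add: F1_val)
  qed
  have tau: "(- Jy p, Jx p) \<in> kerDf f p"
  proof -
    have "\<eta> = ((- Jy p * fst \<eta> + Jx p * snd \<eta>) / ((Jx p)\<^sup>2 + (Jy p)\<^sup>2)) *\<^sub>R (- Jy p, Jx p)"
      by (rule perp2[OF eta(3) g])
    then obtain s where s: "\<eta> = s *\<^sub>R (- Jy p, Jx p)" by blast
    then have "s \<noteq> 0" using eta(1) by (auto simp: zero_prod_def)
    have "(- Jy p, Jx p) = (1 / s) *\<^sub>R \<eta>" using s \<open>s \<noteq> 0\<close> by simp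
    then show ?thesis using eta(2) linear_scale[OF linear_lin22] by (simp add: ker_eq)
  qed
  show ?thesis
  proof (intro set_eqI iffI)
    fix v assume tv: "v \<in> tangent_set (Sr f 1) p"
    have v: "Jx p * fst v + Jy p * snd v = 0" using tv unfolding tangent_S1[OF J0] by simp
    have "v = ((- Jy p * fst v + Jx p * snd v) / ((Jx p)\<^sup>2 + (Jy p)\<^sup>2)) *\<^sub>R (- Jy p, Jx p)"
      by (rule perp2[OF v g])
    then obtain s where vs: "v = s *\<^sub>R (- Jy p, Jx p)" by blast
    have "lin22 (a p) (b p) (c p) (d p) (- Jy p, Jx p) = 0" using tau by (simp add: ker_eq)
    moreover have "lin22 (a p) (b p) (c p) (d p) (s *\<^sub>R (- Jy p, Jx p)) = s *\<^sub>R lin22 (a p) (b p) (c p) (d p) (- Jy p, Jx p)"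
      by (rule linear_scale[OF linear_lin22])
    ultimately show "v \<in> kerDf f p" unfolding vs ker_eq by (simp del: scaleR_Pair)
  next
    fix v assume "v \<in> kerDf f p"
    then have v: "lin22 (a p) (b p) (c p) (d p) v = 0" by (simp add: ker_eq)
    show "v \<in> tangent_set (Sr f 1) p"
    proof (cases "a p = 0 \<and> b p = 0")
      case True
      then have cd: "(c p)\<^sup>2 + (d p)\<^sup>2 \<noteq> 0" using nz by (auto simp: add_nonneg_eq_0_iff)
      have "c p * fst v + d p * snd v = 0" using v by (simp add: lin22_def zero_prod_def)
      from perp2[OF this cd] obtain s where "v = s *\<^sub>R (- d p, c p)" by blast
      then show ?thesis unfolding tangent_S1[OF J0] using F20
        by (simp add: F2_val algebra_simps)
    next
      case False
      then have ab: "(a p)\<^sup>2 + (b p)\<^sup>2 \<noteq> 0" by (auto simp: add_nonneg_eq_0_iff)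
      have "a p * fst v + b p * snd v = 0" using v by (simp add: lin22_def zero_prod_def)
      from perp2[OF this ab] obtain s where "v = s *\<^sub>R (- b p, a p)" by blast
      then show ?thesis unfolding tangent_S1[OF J0] using F10
        by (simp add: F1_val algebra_simps)
    qed
  qed
qed

end


context setting begin

lemma S1_eq'[simp]: "Sr f (Suc 0) = {q. ev PJ q = 0}" using S1_eq by simp

lemma cusp:
  assumes J0: "ev PJ p = 0" and F10: "ev QF1 p = 0" and F20: "ev QF2 p = 0"
  shows "cusp_point f p"
proof -
  define A where "A = jac (Jdet f) (F1 f) p"
  define B where "B = jac (Jdet f) (F2 f) p"
  have AB: "A \<noteq> 0 \<or> B \<noteq> 0"
  proof (rule ccontr)
    assume "\<not> (A \<noteq> 0 \<or> B \<noteq> 0)"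
    then have "g1 p * Jdet f p + g2 p * F1 f p + g3 p * F2 f p
              + g4 p * jac (Jdet f) (F1 f) p + g5 p * jac (Jdet f) (F2 f) p = 0"
      using J0 F10 F20 by (simp add: A_def B_def Jdet_ev F1_ev F2_ev)
    then show False using ideal[of p] by simp
  qed
  obtain al be where ab: "al * A + be * B \<noteq> 0" "al * b p + be * d p \<noteq> 0 \<or> al * a p + be * c p \<noteq> 0"
    using choose_ab[OF AB no_corank2[of p]] by blast
  define \<xi> where "\<xi> = (\<lambda>q. (al * b q + be * d q, - (al * a q + be * c q)))"
  have contxi: "continuous_on S \<xi>" for S
    unfolding \<xi>_def a_def b_def c_def d_def by (intro continuous_intros)
  define W where "W = {q. \<xi> q \<noteq> 0}"
  have openW: "open W" unfolding W_def
    by (rule open_Collect_neq[OF contxi continuous_on_const])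
  have pW: "p \<in> W" using ab(2) by (auto simp: W_def \<xi>_def zero_prod_def)
  have grad: "(ev (dxP PJ) p, ev (dyP PJ) p) \<noteq> (0, 0)" using grad_nz[OF J0] by (simp add: Jx_def Jy_def)
  obtain U r \<gamma> \<gamma>' where P: "open U" "p \<in> U" "U \<subseteq> W" "r > 0" "\<gamma> 0 = p" "inj_on \<gamma> (ball 0 r)"
     "\<gamma> ` ball 0 r = U \<inter> {q. ev PJ q = 0}"
     "\<forall>t\<in>ball 0 r. (\<gamma> has_vector_derivative \<gamma>' t) (at t) \<and> \<gamma>' t \<noteq> 0"
     "continuous_on (ball 0 r) \<gamma>'"
     "\<gamma>' 0 = (1 / ((Jx p)\<^sup>2 + (Jy p)\<^sup>2)) *\<^sub>R (- Jy p, Jx p)"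
    using local_param[OF J0 grad openW pW] unfolding Jx_def[symmetric] Jy_def[symmetric] by blast
  define nn where "nn = (Jx p)\<^sup>2 + (Jy p)\<^sup>2"
  have nn0: "nn \<noteq> 0" using grad_nz[OF J0] by (auto simp: nn_def add_nonneg_eq_0_iff)
  define dk where "dk = (\<lambda>q. cov (Jx q) (Jy q))"
  have c1': "\<forall>q\<in>U. (ev PJ has_derivative blinfun_apply (dk q)) (at q)"
    using ev_has_derivative by (simp add: dk_def Jx_def Jy_def)
  have c2': "continuous_on U dk" unfolding dk_def Jx_def Jy_def by (intro continuous_intros)
  have c3': "\<forall>q\<in>U \<inter> Sr f 1. ev PJ q = 0" by (simp add: S1_eq)
  have c4': "dk p \<noteq> 0"
  proof
    assume "dk p = 0"
    then have "blinfun_apply (dk p) (Jx p, Jy p) = 0" by simp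
    then have "(Jx p)\<^sup>2 + (Jy p)\<^sup>2 = 0" by (simp add: dk_def power2_eq_square)
    then show False using nn0 by (simp add: nn_def)
  qed
  have c5': "continuous_on (U \<inter> Sr f 1) \<xi>" by (rule contxi)
  have c6': "\<forall>q\<in>U \<inter> Sr f 1. \<xi> q \<noteq> 0 \<and> Df f q (\<xi> q) = 0"
  proof
    fix q assume q: "q \<in> U \<inter> Sr f 1"
    then have "\<xi> q \<noteq> 0" using P(3) by (auto simp: W_def)
    moreover have "ev PJ q = 0" using q by (simp add: S1_eq)
    then have "Df f q (\<xi> q) = 0"
      by (simp add: Df_eq \<xi>_def lin22_def J_abcd zero_prod_def algebra_simps)
    ultimately show "\<xi> q \<noteq> 0 \<and> Df f q (\<xi> q) = 0" by blast
  qed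
  have c7': "\<gamma> ` ball 0 r = U \<inter> Sr f 1" using P(7) by (simp add: S1_eq)
  define h where "h = (\<lambda>t. blinfun_apply (dk (\<gamma> t)) (\<xi> (\<gamma> t)))"
  have heq: "h = (\<lambda>t. al * ev QF1 (\<gamma> t) + be * ev QF2 (\<gamma> t))"
    by (rule ext) (simp add: h_def dk_def \<xi>_def F1_val F2_val algebra_simps)
  have h0: "h 0 = 0" using F10 F20 P(5) by (simp add: heq)
  have gd: "(\<gamma> has_vector_derivative \<gamma>' 0) (at 0)" using P(4,8) by simp
  have "(h has_real_derivative
      al * (ev (dxP QF1) (\<gamma> 0) * fst (\<gamma>' 0) + ev (dyP QF1) (\<gamma> 0) * snd (\<gamma>' 0)) +
      be * (ev (dxP QF2) (\<gamma> 0) * fst (\<gamma>' 0) + ev (dyP QF2) (\<gamma> 0) * snd (\<gamma>' 0))) (at 0)"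
    unfolding heq by (intro DERIV_add DERIV_cmult ev_chain gd)
  moreover have "al * (ev (dxP QF1) (\<gamma> 0) * fst (\<gamma>' 0) + ev (dyP QF1) (\<gamma> 0) * snd (\<gamma>' 0)) +
      be * (ev (dxP QF2) (\<gamma> 0) * fst (\<gamma>' 0) + ev (dyP QF2) (\<gamma> 0) * snd (\<gamma>' 0))
      = (al * A + be * B) / nn"
    using P(5,10) nn0 unfolding A_def B_def jac1_val jac2_val nn_def[symmetric]
    by (simp add: field_simps)
  ultimately have hd: "(h has_real_derivative ((al * A + be * B) / nn)) (at 0)" by simp
  have hc: "(al * A + be * B) / nn \<noteq> 0" using ab(1) nn0 by simp
  have "p \<in> Sr f 1" unfolding S1_eq using J0 by simp
  moreover have "tangent_set (Sr f 1) p = kerDf f p" by (rule tangent_eq_ker[OF J0 F10 F20])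
  moreover have "\<exists>U k dk \<xi> \<gamma> \<gamma>' e. open U \<and> p \<in> U \<and> e > 0 \<and>
        (\<forall>q\<in>U. (k has_derivative blinfun_apply (dk q)) (at q)) \<and> continuous_on U dk \<and>
        (\<forall>q\<in>U \<inter> Sr f 1. k q = 0) \<and> dk p \<noteq> 0 \<and>
        continuous_on (U \<inter> Sr f 1) \<xi> \<and>
        (\<forall>q\<in>U \<inter> Sr f 1. \<xi> q \<noteq> 0 \<and> Df f q (\<xi> q) = 0) \<and>
        \<gamma> 0 = p \<and> inj_on \<gamma> (ball 0 e) \<and> \<gamma> ` ball 0 e = U \<inter> Sr f 1 \<and>
        (\<forall>t\<in>ball 0 e. (\<gamma> has_vector_derivative \<gamma>' t) (at t) \<and> \<gamma>' t \<noteq> 0) \<and>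
        continuous_on (ball 0 e) \<gamma>' \<and>
        (let h = (\<lambda>t. blinfun_apply (dk (\<gamma> t)) (\<xi> (\<gamma> t))) in
           h 0 = 0 \<and> (\<exists>c. c \<noteq> 0 \<and> (h has_real_derivative c) (at 0)))"
    apply (rule exI[of _ U], rule exI[of _ "ev PJ"], rule exI[of _ dk], rule exI[of _ \<xi>],
        rule exI[of _ \<gamma>], rule exI[of _ \<gamma>'], rule exI[of _ r])
    unfolding Let_def h_def[symmetric]
    using P(1,2,4,5,6,8,9) c1' c2' c3' c4' c5' c6' c7' h0 hd hc by blast
  ultimately show ?thesis unfolding cusp_point_def by blast
qed

lemma cusp_imp:
  assumes "cusp_point f p"
  shows "ev PJ p = 0 \<and> ev QF1 p = 0 \<and> ev QF2 p = 0"
proof -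
  have S: "p \<in> Sr f 1" and T: "tangent_set (Sr f 1) p = kerDf f p"
    using assms by (auto simp: cusp_point_def)
  have J0: "ev PJ p = 0" using S unfolding S1_eq by simp
  show ?thesis
  proof (rule ccontr)
    assume "\<not> ?thesis"
    then have F: "ev QF1 p \<noteq> 0 \<or> ev QF2 p \<noteq> 0" using J0 by blast
    obtain \<eta> where eta: "lin22 (a p) (b p) (c p) (d p) \<eta> = 0" "Jx p * fst \<eta> + Jy p * snd \<eta> \<noteq> 0"
    proof (cases "ev QF1 p \<noteq> 0")
      case True
      then show ?thesis using that[of "(b p, - a p)"] eta1_ker[OF J0] by (simp add: F1_val)
    next
      case False
      then have "ev QF2 p \<noteq> 0" using F by simp
      then show ?thesis using that[of "(d p, - c p)"] eta2_ker[OF J0] by (simp add: F2_val)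
    qed
    have "\<eta> \<in> kerDf f p" using eta(1) by (simp add: ker_eq)
    then have "\<eta> \<in> tangent_set (Sr f 1) p" using T by simp
    then show False using eta(2) unfolding tangent_S1[OF J0] by simp
  qed
qed

end


definition "e11 (L::pt \<Rightarrow>\<^sub>L pt) = fst (blinfun_apply L (1,0))"
definition "e12 (L::pt \<Rightarrow>\<^sub>L pt) = fst (blinfun_apply L (0,1))"
definition "e21 (L::pt \<Rightarrow>\<^sub>L pt) = snd (blinfun_apply L (1,0))"
definition "e22 (L::pt \<Rightarrow>\<^sub>L pt) = snd (blinfun_apply L (0,1))"
definition "bdet L = e11 L * e22 L - e12 L * e21 L"
definition "ddet L M = e11 L * e22 M + e22 L * e11 M - e12 L * e21 M - e21 L * e12 M"

lemma ent_simps[simp]: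
  "e11 (L + M) = e11 L + e11 M" "e12 (L + M) = e12 L + e12 M"
  "e21 (L + M) = e21 L + e21 M" "e22 (L + M) = e22 L + e22 M"
  "e11 (r *\<^sub>R L) = r * e11 L" "e12 (r *\<^sub>R L) = r * e12 L"
  "e21 (r *\<^sub>R L) = r * e21 L" "e22 (r *\<^sub>R L) = r * e22 L"
  "e11 (mk a b c d) = a" "e12 (mk a b c d) = b" "e21 (mk a b c d) = c" "e22 (mk a b c d) = d"
  by (simp_all add: e11_def e12_def e21_def e22_def blinfun.add_left blinfun.scaleR_left lin22_def)

lemma blinfun_lin22: "blinfun_apply L = lin22 (e11 L) (e12 L) (e21 L) (e22 L)"
proof (rule ext)
  fix v :: pt
  have "v = fst v *\<^sub>R (1, 0) + snd v *\<^sub>R (0, 1)" by (simp add: prod_eq_iff)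
  then have "blinfun_apply L v = fst v *\<^sub>R blinfun_apply L (1, 0) + snd v *\<^sub>R blinfun_apply L (0, 1)"
    by (metis blinfun.add_right blinfun.scaleR_right)
  then show "blinfun_apply L v = lin22 (e11 L) (e12 L) (e21 L) (e22 L) v"
    by (simp add: lin22_def e11_def e12_def e21_def e22_def prod_eq_iff mult.commute)
qed

lemma Sjet_iff: "(x, y, L) \<in> Sjet r \<longleftrightarrow>
  r = (if bdet L \<noteq> 0 then 0 else if e11 L = 0 \<and> e12 L = 0 \<and> e21 L = 0 \<and> e22 L = 0 then 2 else 1)"
  unfolding Sjet_def blinfun_lin22 dim_range_lin22 bdet_def by auto

lemma tangent_Sjet0:
  assumes "bdet L \<noteq> 0"
  shows "tangent_set (Sjet 0) (x, y, L) = UNIV"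
proof (intro set_eqI iffI UNIV_I)
  fix w :: jet1
  obtain w1 w2 W where w: "w = (w1, w2, W)" by (metis prod.collapse)
  define g where "g = (\<lambda>t::real. bdet (L + t *\<^sub>R W))"
  have "isCont g 0" unfolding g_def bdet_def by (simp add: algebra_simps)
  moreover have "g 0 \<noteq> 0" using assms by (simp add: g_def)
  ultimately obtain e where e: "e > 0" "\<And>t. dist 0 t < e \<Longrightarrow> g t \<noteq> 0"
    using continuous_at_avoid by blast
  define \<gamma> where "\<gamma> = (\<lambda>t::real. t *\<^sub>R w + (x, y, L))"
  have "(\<gamma> has_vector_derivative w) (at 0)"
  proof -
    have "((\<lambda>t::real. t *\<^sub>R w) has_vector_derivative (0 *\<^sub>R 0 + 1 *\<^sub>R w)) (at 0)"
      by (intro has_vector_derivative_scaleR DERIV_ident has_vector_derivative_const)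
    then show ?thesis unfolding \<gamma>_def by (simp add: has_vector_derivative_add_const)
  qed
  moreover have "\<gamma> t \<in> Sjet 0" if "t \<in> ball 0 e" for t
    using e(2)[of t] that by (simp add: \<gamma>_def w Sjet_iff g_def algebra_simps)
  ultimately show "w \<in> tangent_set (Sjet 0) (x, y, L)"
    unfolding tangent_set_def using e(1) by (intro CollectI exI[of _ \<gamma>] exI[of _ e]) (auto simp: \<gamma>_def)
qed

lemma bdet_expand: "bdet (L + t *\<^sub>R M + s *\<^sub>R E) =
   bdet L + t * ddet L M + t^2 * bdet M + s * (ddet L E + t * ddet M E) + s^2 * bdet E"
  by (simp add: bdet_def ddet_def algebra_simps power2_eq_square)

lemma phi_deriv:
  assumes "e0 \<noteq> (0::real)"
  shows "((\<lambda>t. - (t^2 * bM) / (e0 + t * e1)) has_real_derivative 0) (at 0)"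
  using assms by (auto intro!: derivative_eq_intros)

lemma tangent_Sjet1:
  assumes bL: "bdet L = 0" and nzL: "\<not> (e11 L = 0 \<and> e12 L = 0 \<and> e21 L = 0 \<and> e22 L = 0)"
    and dM: "ddet L M = 0"
  shows "(u, w, M) \<in> tangent_set (Sjet 1) (x, y, L)"
proof -
  obtain E where E: "bdet E = 0" "ddet L E \<noteq> 0"
  proof -
    consider "e22 L \<noteq> 0" | "e11 L \<noteq> 0" | "e12 L \<noteq> 0" | "e21 L \<noteq> 0" using nzL by blast
    then show ?thesis
    proof cases
      case 1 then show ?thesis using that[of "mk 1 0 0 0"] by (simp add: bdet_def ddet_def)
    next
      case 2 then show ?thesis using that[of "mk 0 0 0 1"] by (simp add: bdet_def ddet_def)
    next
      case 3 then show ?thesis using that[of "mk 0 0 1 0"] by (simp add: bdet_def ddet_def)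
    next
      case 4 then show ?thesis using that[of "mk 0 1 0 0"] by (simp add: bdet_def ddet_def)
    qed
  qed
  define e0 where "e0 = ddet L E"
  define e1 where "e1 = ddet M E"
  define bM where "bM = bdet M"
  define \<phi> where "\<phi> = (\<lambda>t::real. - (t^2 * bM) / (e0 + t * e1))"
  define X where "X = (\<lambda>t. L + t *\<^sub>R M + \<phi> t *\<^sub>R E)"
  define nz where "nz = (\<lambda>t. (e11 (X t))\<^sup>2 + (e12 (X t))\<^sup>2 + (e21 (X t))\<^sup>2 + (e22 (X t))\<^sup>2)"
  have e00: "e0 \<noteq> 0" using E by (simp add: e0_def)
  have cq: "isCont (\<lambda>t. e0 + t * e1) 0" by simp
  obtain eq where eq: "eq > 0" "\<And>t. dist 0 t < eq \<Longrightarrow> e0 + t * e1 \<noteq> 0"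
    using continuous_at_avoid[OF cq, of 0] e00 by auto
  have cn: "isCont nz 0" unfolding nz_def X_def \<phi>_def ent_simps using e00 by (intro continuous_intros) auto
  have "nz 0 \<noteq> 0" using nzL by (simp add: nz_def X_def \<phi>_def add_nonneg_eq_0_iff)
  then obtain en where en: "en > 0" "\<And>t. dist 0 t < en \<Longrightarrow> nz t \<noteq> 0"
    using continuous_at_avoid[OF cn, of 0] by auto
  define e where "e = min eq en"
  define \<gamma> where "\<gamma> = (\<lambda>t. (t *\<^sub>R (u, w, M) + \<phi> t *\<^sub>R ((0::pt), (0::pt), E)) + (x, y, L))"
  have mem: "\<gamma> t \<in> Sjet 1" if "t \<in> ball 0 e" for t
  proof -
    have q: "e0 + t * e1 \<noteq> 0" using eq(2)[of t] that by (simp add: e_def)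
    have n: "nz t \<noteq> 0" using en(2)[of t] that by (simp add: e_def)
    have "bdet (X t) = 0"
      unfolding X_def bdet_expand using bL dM E(1) q
      by (simp add: e0_def[symmetric] e1_def[symmetric] bM_def[symmetric] \<phi>_def field_simps power2_eq_square)
    moreover have "\<not> (e11 (X t) = 0 \<and> e12 (X t) = 0 \<and> e21 (X t) = 0 \<and> e22 (X t) = 0)"
      using n by (auto simp: nz_def)
    moreover have "\<gamma> t = (x + t *\<^sub>R u, y + t *\<^sub>R w, X t)" by (simp add: \<gamma>_def X_def algebra_simps)
    ultimately show ?thesis by (simp add: Sjet_iff)
  qed
  have der: "(\<gamma> has_vector_derivative (u, w, M)) (at 0)"
  proof -
    have "((\<lambda>t::real. t *\<^sub>R (u, w, M) + \<phi> t *\<^sub>R ((0::pt), (0::pt), E)) has_vector_derivative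
       ((0 *\<^sub>R 0 + 1 *\<^sub>R (u, w, M)) + (\<phi> 0 *\<^sub>R 0 + 0 *\<^sub>R ((0::pt), (0::pt), E)))) (at 0)"
      by (intro has_vector_derivative_add has_vector_derivative_scaleR DERIV_ident has_vector_derivative_const
          phi_deriv[OF e00, of bM e1, folded \<phi>_def])
    moreover have val: "(0 *\<^sub>R 0 + 1 *\<^sub>R (u, w, M)) + (\<phi> 0 *\<^sub>R 0 + 0 *\<^sub>R ((0::pt), (0::pt), E)) = (u, w, M)"
      by simp
    ultimately have "((\<lambda>t::real. t *\<^sub>R (u, w, M) + \<phi> t *\<^sub>R ((0::pt), (0::pt), E)) has_vector_derivative (u, w, M)) (at 0)"
      by (simp only:)
    then show ?thesis unfolding \<gamma>_def by (rule has_vector_derivative_add_const[THEN iffD2])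
  qed
  have "\<gamma> 0 = (x, y, L)" by (simp add: \<gamma>_def \<phi>_def)
  moreover have "e > 0" using eq en by (simp add: e_def)
  ultimately show ?thesis unfolding tangent_set_def using mem der by blast
qed


lemma ent_minus[simp]:
  "e11 (L - M) = e11 L - e11 M" "e12 (L - M) = e12 L - e12 M"
  "e21 (L - M) = e21 L - e21 M" "e22 (L - M) = e22 L - e22 M"
  by (simp_all add: e11_def e12_def e21_def e22_def blinfun.diff_left)

definition "dev Q p v = ev (dxP Q) p * fst v + ev (dyP Q) p * snd v"

lemma mk_has_derivative:
  "((\<lambda>q. mk (ev A q) (ev B q) (ev C q) (ev D q)) has_derivative
     (\<lambda>v. mk (dev A p v) (dev B p v) (dev C p v) (dev D p v))) (at p)"
proof -
  have "((\<lambda>q. ev A q *\<^sub>R mk 1 0 0 0 + ev B q *\<^sub>R mk 0 1 0 0 + ev C q *\<^sub>R mk 0 0 1 0 + ev D q *\<^sub>R mk 0 0 0 1) has_derivative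
     (\<lambda>v. (ev A p *\<^sub>R 0 + dev A p v *\<^sub>R mk 1 0 0 0) + (ev B p *\<^sub>R 0 + dev B p v *\<^sub>R mk 0 1 0 0)
        + (ev C p *\<^sub>R 0 + dev C p v *\<^sub>R mk 0 0 1 0) + (ev D p *\<^sub>R 0 + dev D p v *\<^sub>R mk 0 0 0 1))) (at p)"
    unfolding dev_def
    by (intro has_derivative_add has_derivative_scaleR ev_has_derivative has_derivative_const)
  then show ?thesis
    by (subst (1 2) mk_decomp) simp
qed

context setting begin

lemma jet1_eq: "jet1 f = (\<lambda>p. (p, f p, mk (a p) (b p) (c p) (d p)))"
  by (rule ext) (simp add: jet1_def Df_eq mk_def)

lemma jet_deriv: "(jet1 f has_derivative
   (\<lambda>v. (v, lin22 (a p) (b p) (c p) (d p) v,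
      mk (dev (dxP P1) p v) (dev (dyP P1) p v) (dev (dxP P2) p v) (dev (dyP P2) p v)))) (at p)"
  unfolding jet1_eq
  by (intro has_derivative_Pair has_derivative_ident f_deriv mk_has_derivative[of "dxP P1" "dyP P1" "dxP P2" "dyP P2", folded a_def b_def c_def d_def])

lemma ddet_H: "ddet (mk (a p) (b p) (c p) (d p))
   (mk (dev (dxP P1) p v) (dev (dyP P1) p v) (dev (dxP P2) p v) (dev (dyP P2) p v))
   = Jx p * fst v + Jy p * snd v"
  by (simp add: ddet_def dev_def Jx_def Jy_def PJ_def jacP_def dxP_diff ev_dyP_diff ev_dxP_mult ev_dyP_mult
      a_def b_def c_def d_def algebra_simps)

lemma one_generic: "one_generic f"
  unfolding one_generic_def transversal_def
proof (intro allI impI)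
  fix r p
  assume mem: "jet1 f p \<in> Sjet r"
  define L where "L = mk (a p) (b p) (c p) (d p)"
  define D where "D = (\<lambda>v. (v, lin22 (a p) (b p) (c p) (d p) v,
      mk (dev (dxP P1) p v) (dev (dyP P1) p v) (dev (dxP P2) p v) (dev (dyP P2) p v)))"
  have jp: "jet1 f p = (p, f p, L)" by (simp add: jet1_eq L_def)
  have nz: "\<not> (a p = 0 \<and> b p = 0 \<and> c p = 0 \<and> d p = 0)" by (rule no_corank2)
  have r: "r = (if ev PJ p \<noteq> 0 then 0 else 1)"
    using mem nz unfolding jp Sjet_iff by (simp add: L_def bdet_def J_abcd)
  have "setsum (range D) (tangent_set (Sjet r) (jet1 f p)) = UNIV"
  proof (cases "ev PJ p \<noteq> 0")
    case True
    then have r0: "r = 0" using r by simp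
    have T: "tangent_set (Sjet 0) (p, f p, L) = UNIV"
      by (rule tangent_Sjet0) (use True in \<open>simp add: L_def bdet_def J_abcd\<close>)
    show ?thesis unfolding r0 jp T setsum_def
    proof (intro set_eqI iffI UNIV_I)
      fix z show "z \<in> {x + y |x y. x \<in> range D \<and> y \<in> UNIV}"
        by (intro CollectI exI[of _ "D 0"] exI[of _ "z - D 0"]) auto
    qed
  next
    case False
    then have r1: "r = 1" and J0: "ev PJ p = 0" using r by auto
    define nn where "nn = (Jx p)\<^sup>2 + (Jy p)\<^sup>2"
    have nn0: "nn \<noteq> 0" using grad_nz[OF J0] by (auto simp: nn_def add_nonneg_eq_0_iff)
    show ?thesis unfolding r1 jp setsum_def
    proof (intro set_eqI iffI UNIV_I)
      fix z :: jet1
      obtain z1 z2 Z where z: "z = (z1, z2, Z)" by (metis prod.collapse)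
      define s where "s = ddet L Z / nn"
      define v where "v = s *\<^sub>R (Jx p, Jy p)"
      obtain v1 v2 H where Dv: "D v = (v1, v2, H)" by (metis prod.collapse)
      have H: "H = mk (dev (dxP P1) p v) (dev (dyP P1) p v) (dev (dxP P2) p v) (dev (dyP P2) p v)"
        using Dv by (auto simp: D_def)
      have dH: "ddet L H = s * nn" unfolding H L_def ddet_H
        by (simp add: v_def nn_def power2_eq_square algebra_simps)
      have "ddet L (Z - H) = ddet L Z - ddet L H" by (simp add: ddet_def algebra_simps)
      also have "\<dots> = 0" using dH nn0 by (simp add: s_def)
      finally have "ddet L (Z - H) = 0" .
      moreover have "bdet L = 0" using J0 by (simp add: L_def bdet_def J_abcd)
      moreover have "\<not> (e11 L = 0 \<and> e12 L = 0 \<and> e21 L = 0 \<and> e22 L = 0)" using nz by (simp add: L_def)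
      ultimately have "(z1 - v1, z2 - v2, Z - H) \<in> tangent_set (Sjet 1) (p, f p, L)"
        using tangent_Sjet1 by blast
      moreover have "z = D v + (z1 - v1, z2 - v2, Z - H)" by (simp add: z Dv)
      ultimately show "z \<in> {x + y |x y. x \<in> range D \<and> y \<in> tangent_set (Sjet 1) (p, f p, L)}" by blast
    qed
  qed
  moreover have "(jet1 f has_derivative D) (at p)" unfolding D_def by (rule jet_deriv)
  ultimately show "\<exists>D. (jet1 f has_derivative D) (at p) \<and> setsum (range D) (tangent_set (Sjet r) (jet1 f p)) = UNIV"
    by blast
qed

end


context setting begin

lemma main:
  "one_generic f
    \<and> (\<forall>p. corank f p \<noteq> 0 \<longrightarrow> fold_point f p \<or> cusp_point f p)
    \<and> {p. cusp_point f p} = {p. Jdet f p = 0 \<and> F1 f p = 0 \<and> F2 f p = 0}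
    \<and> finite {p. cusp_point f p}"
proof (intro conjI allI impI)
  show "one_generic f" by (rule one_generic)
next
  fix p assume "corank f p \<noteq> 0"
  then have J0: "ev PJ p = 0" by (simp add: corank_eq split: if_splits)
  show "fold_point f p \<or> cusp_point f p"
  proof (cases "ev QF1 p \<noteq> 0 \<or> ev QF2 p \<noteq> 0")
    case True then show ?thesis using fold[OF J0] by blast
  next
    case False then show ?thesis using cusp[OF J0] by blast
  qed
next
  show eq: "{p. cusp_point f p} = {p. Jdet f p = 0 \<and> F1 f p = 0 \<and> F2 f p = 0}"
    using cusp cusp_imp by (auto simp: Jdet_ev F1_ev F2_ev)
next
  have sub: "{p. cusp_point f p} \<subseteq>
     {p. ev PJ p = 0 \<and> ev QF1 p = 0 \<and> jac (ev PJ) (ev QF1) p \<noteq> 0} \<union>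
     {p. ev PJ p = 0 \<and> ev QF2 p = 0 \<and> jac (ev PJ) (ev QF2) p \<noteq> 0}"
  proof
    fix p assume "p \<in> {p. cusp_point f p}"
    then have z: "ev PJ p = 0" "ev QF1 p = 0" "ev QF2 p = 0" using cusp_imp by auto
    have "g4 p * jac (Jdet f) (F1 f) p + g5 p * jac (Jdet f) (F2 f) p = 1"
      using ideal[of p] z by (simp add: Jdet_ev F1_ev F2_ev)
    then have "jac (ev PJ) (ev QF1) p \<noteq> 0 \<or> jac (ev PJ) (ev QF2) p \<noteq> 0"
      by (auto simp: Jdet_ev F1_ev F2_ev)
    then show "p \<in> {p. ev PJ p = 0 \<and> ev QF1 p = 0 \<and> jac (ev PJ) (ev QF1) p \<noteq> 0} \<union>
     {p. ev PJ p = 0 \<and> ev QF2 p = 0 \<and> jac (ev PJ) (ev QF2) p \<noteq> 0}" using z by auto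
  qed
  show "finite {p. cusp_point f p}"
    by (rule finite_subset[OF sub]) (intro finite_UnI fin_Z)
qed

end

theorem mainTheorem3:
  fixes f :: "real \<times> real \<Rightarrow> real \<times> real"
  assumes poly: "poly2 (comp1 f)" "poly2 (comp2 f)"
    and ideal: "\<exists>g1 g2 g3 g4 g5. poly2 g1 \<and> poly2 g2 \<and> poly2 g3 \<and> poly2 g4 \<and> poly2 g5 \<and>
        (\<forall>p. g1 p * Jdet f p + g2 p * F1 f p + g3 p * F2 f p
              + g4 p * jac (Jdet f) (F1 f) p + g5 p * jac (Jdet f) (F2 f) p = 1)"
  shows "one_generic f
    \<and> (\<forall>p. corank f p \<noteq> 0 \<longrightarrow> fold_point f p \<or> cusp_point f p)
    \<and> {p. cusp_point f p} = {p. Jdet f p = 0 \<and> F1 f p = 0 \<and> F2 f p = 0}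
    \<and> finite {p. cusp_point f p}"
proof -
  obtain P1 where P1: "comp1 f = ev P1" using poly2_ev[OF poly(1)] by blast
  obtain P2 where P2: "comp2 f = ev P2" using poly2_ev[OF poly(2)] by blast
  obtain g1 g2 g3 g4 g5 where g: "\<forall>p. g1 p * Jdet f p + g2 p * F1 f p + g3 p * F2 f p
              + g4 p * jac (Jdet f) (F1 f) p + g5 p * jac (Jdet f) (F2 f) p = 1"
    using ideal by blast
  interpret setting f P1 P2 g1 g2 g3 g4 g5
    using P1 P2 g by unfold_locales auto
  show ?thesis by (rule main)
qed


end
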